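(* Let $\Gamma$ be a convex digital polygon and let $[V_kV_{k+1}]$ be a supporting edge of slope $a/b$ made of $f$ patterns $(a,b)$, and let $MS$ be the unique maximal segment containing it. Then \[ \mathcal{L}^1(V_kV_{k+1})\le\mathcal{L}^1(MS)\le\frac{f+2}{f}\,\mathcal{L}^1(V_kV_{k+1})-2 \quad\text{and}\quad \tfrac13\mathcal{L}^1(MS)\le\mathcal{L}^1(V_kV_{k+1})\le\mathcal{L}^1(MS)\le 3\,\mathcal{L}^1(V_kV_{k+1}). \]
   Context: A standard line with slope $a/b$ and shift $\mu$ ($\gcd(a,b)=1$) is $\{(x,y)\in\mathbb{Z}^2:\mu\le ax-by<\mu+|a|+|b|\}$; upper leaning points have $ax-by=\mu$, lower leaning points $ax-by=\mu+|a|+|b|-1$. A pattern $(a,b)$ is the Freeman word between two consecutive upper leaning points. A convex digital polygon (CDP) is a finite $\Gamma\subset\mathbb{Z}^2$ with $\Gamma=\mathrm{Conv}(\Gamma)\cap\mathbb{Z}^2$; vertices $V_1,\dots,V_e$ (cyclic) form the minimal subset whose convex hull digitizes to $\Gamma$; the boundary points form a closed 4-connected contour through the vertices; the digital edge $[V_kV_{k+1}]$ is the contour portion from $V_k$ to $V_{k+1}$. A set of consecutive contour points is a DSS if it lies in a standard line; its leaning points are those of its characteristic line (the containing standard line with minimal $|a|+|b|$). A maximal segment is a DSS not extendable at either end by a contour point. A supporting edge is a digital edge whose two vertices are the leftmost and rightmost upper leaning points of some maximal segment. $\mathcal{L}^1$ is the number of unit steps (city-block length). First-octant conventions, polygon on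 the side of lower leaning points; other octants by symmetry. *)

theory Defs
  imports "HOL-Analysis.Analysis"
begin

type_synonym pt = "int \<times> int"

definition toR :: "pt \<Rightarrow> real \<times> real" where
  "toR p = (real_of_int (fst p), real_of_int (snd p))"

definition digitization :: "pt set \<Rightarrow> pt set" where
  "digitization W = {p. toR p \<in> convex hull (toR ` W)}"

definition cdp :: "pt set \<Rightarrow> bool" where
  "cdp \<Gamma> \<longleftrightarrow> finite \<Gamma> \<and> \<Gamma> = digitization \<Gamma>"

definition vertex_set :: "pt set \<Rightarrow> pt set \<Rightarrow> bool" where
  "vertex_set \<Gamma> V \<longleftrightarrow> V \<subseteq> \<Gamma> \<and> digitization V = \<Gamma> \<and>
     (\<forall>W. W \<subset> V \<longrightarrow> digitization W \<noteq> \<Gamma>)"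

definition adj4 :: "pt \<Rightarrow> pt \<Rightarrow> bool" where
  "adj4 p q \<longleftrightarrow> \<bar>fst p - fst q\<bar> + \<bar>snd p - snd q\<bar> = 1"

definition adj8 :: "pt \<Rightarrow> pt \<Rightarrow> bool" where
  "adj8 p q \<longleftrightarrow> p \<noteq> q \<and> \<bar>fst p - fst q\<bar> \<le> 1 \<and> \<bar>snd p - snd q\<bar> \<le> 1"

definition boundary_pts :: "pt set \<Rightarrow> pt set" where
  "boundary_pts \<Gamma> = {p \<in> \<Gamma>. \<exists>q. adj8 p q \<and> q \<notin> \<Gamma>}"

text \<open>The contour: a closed simple 4-connected curve, given as an n-periodic map
  c :: int => pt, through exactly the boundary points, traversed clockwise
  (negative signed area), so that the polygon lies on the right-hand side.\<close>
definition contour :: "pt set \<Rightarrow> (int \<Rightarrow> pt) \<Rightarrow> int \<Rightarrow> bool" where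
  "contour \<Gamma> c n \<longleftrightarrow> 0 < n \<and> (\<forall>i. c (i + n) = c i) \<and> (\<forall>i. adj4 (c i) (c (i + 1))) \<and>
     inj_on c {0..<n} \<and> range c = boundary_pts \<Gamma> \<and>
     (\<Sum>i\<in>{0..<n}. fst (c i) * snd (c (i + 1)) - fst (c (i + 1)) * snd (c i)) < 0"

definition std_line :: "int \<Rightarrow> int \<Rightarrow> int \<Rightarrow> pt set" where
  "std_line a b \<mu> = {p. \<mu> \<le> a * fst p - b * snd p \<and> a * fst p - b * snd p < \<mu> + \<bar>a\<bar> + \<bar>b\<bar>}"

definition in_std_line :: "pt set \<Rightarrow> int \<Rightarrow> int \<Rightarrow> int \<Rightarrow> bool" where
  "in_std_line S a b \<mu> \<longleftrightarrow> coprime a b \<and> S \<subseteq> std_line a b \<mu>"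

definition char_line :: "pt set \<Rightarrow> int \<Rightarrow> int \<Rightarrow> int \<Rightarrow> bool" where
  "char_line S a b \<mu> \<longleftrightarrow> in_std_line S a b \<mu> \<and>
     (\<forall>a' b' \<mu>'. in_std_line S a' b' \<mu>' \<longrightarrow> \<bar>a\<bar> + \<bar>b\<bar> \<le> \<bar>a'\<bar> + \<bar>b'\<bar>)"

definition upper_leaning :: "int \<Rightarrow> int \<Rightarrow> int \<Rightarrow> pt \<Rightarrow> bool" where
  "upper_leaning a b \<mu> p \<longleftrightarrow> a * fst p - b * snd p = \<mu>"

text \<open>A contour portion is given by an index interval [i..j] with j - i < n.
  It is a DSS if its points lie in a standard line.\<close>
definition is_dss :: "(int \<Rightarrow> pt) \<Rightarrow> int \<Rightarrow> int \<Rightarrow> int \<Rightarrow> bool" where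
  "is_dss c n i j \<longleftrightarrow> i \<le> j \<and> j - i < n \<and> (\<exists>a b \<mu>. in_std_line (c ` {i..j}) a b \<mu>)"

definition maximal_segment :: "(int \<Rightarrow> pt) \<Rightarrow> int \<Rightarrow> int \<Rightarrow> int \<Rightarrow> bool" where
  "maximal_segment c n i j \<longleftrightarrow> is_dss c n i j \<and> \<not> is_dss c n (i - 1) j \<and> \<not> is_dss c n i (j + 1)"

text \<open>Characteristic line of the portion [i..j], with (a,b) oriented so that (b,a) points
  in the traversal direction; since the contour is clockwise, the polygon then lies on the
  side of the lower leaning points (first-octant convention, other octants by symmetry).\<close>
definition oriented_char_line :: "(int \<Rightarrow> pt) \<Rightarrow> int \<Rightarrow> int \<Rightarrow> int \<Rightarrow> int \<Rightarrow> int \<Rightarrow> bool" where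
  "oriented_char_line c i j a b \<mu> \<longleftrightarrow> char_line (c ` {i..j}) a b \<mu> \<and>
     0 < b * (fst (c j) - fst (c i)) + a * (snd (c j) - snd (c i))"

definition digital_edge :: "pt set \<Rightarrow> (int \<Rightarrow> pt) \<Rightarrow> int \<Rightarrow> int \<Rightarrow> int \<Rightarrow> bool" where
  "digital_edge V c n p q \<longleftrightarrow> p < q \<and> q - p < n \<and> c p \<in> V \<and> c q \<in> V \<and>
     (\<forall>k. p < k \<and> k < q \<longrightarrow> c k \<notin> V)"

definition supporting_edge ::
  "pt set \<Rightarrow> (int \<Rightarrow> pt) \<Rightarrow> int \<Rightarrow> int \<Rightarrow> int \<Rightarrow> int \<Rightarrow> int \<Rightarrow> int \<Rightarrow> bool" where
  "supporting_edge V c n p q a b \<mu> \<longleftrightarrow> digital_edge V c n p q \<and>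
     (\<exists>s t. maximal_segment c n s t \<and> oriented_char_line c s t a b \<mu> \<and>
        s \<le> p \<and> q \<le> t \<and> upper_leaning a b \<mu> (c p) \<and> upper_leaning a b \<mu> (c q) \<and>
        (\<forall>k\<in>{s..t}. upper_leaning a b \<mu> (c k) \<longrightarrow> p \<le> k \<and> k \<le> q))"

text \<open>The portion [p..q] is made of f patterns (a,b): it contains exactly f+1 upper
  leaning points (consecutive upper leaning points delimit the patterns).\<close>
definition made_of_patterns :: "(int \<Rightarrow> pt) \<Rightarrow> int \<Rightarrow> int \<Rightarrow> int \<Rightarrow> int \<Rightarrow> int \<Rightarrow> nat \<Rightarrow> bool" where
  "made_of_patterns c p q a b \<mu> f \<longleftrightarrow> card {k \<in> {p..q}. upper_leaning a b \<mu> (c k)} = f + 1"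

text \<open>City-block length of the contour portion [i..j]: its number of unit steps.\<close>
definition L1 :: "int \<Rightarrow> int \<Rightarrow> real" where
  "L1 i j = real_of_int (j - i)"

end

theory Submission
  imports Defs
begin

definition Vl :: "int \<Rightarrow> int \<Rightarrow> pt \<Rightarrow> int" where
  "Vl a b z = a * fst z - b * snd z"

definition mv :: "(int \<Rightarrow> pt) \<Rightarrow> int \<Rightarrow> pt" where
  "mv c k = (fst (c (k+1)) - fst (c k), snd (c (k+1)) - snd (c k))"

definition units :: "pt set" where "units = {(1,0),(-1,0),(0,1),(0,-1)}"

definition ng :: "pt \<Rightarrow> pt" where "ng m = (- fst m, - snd m)"

lemma V_step: "Vl a b (c (k+1)) = Vl a b (c k) + Vl a b (mv c k)"
  by (simp add: Vl_def mv_def algebra_simps)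

lemma adj4_units: "adj4 p q \<longleftrightarrow> (fst q - fst p, snd q - snd p) \<in> units"
  unfolding adj4_def units_def by (cases p; cases q) (auto simp: abs_if split: if_splits)

lemma std_line_iff: "z \<in> std_line a b \<mu> \<longleftrightarrow> \<mu> \<le> Vl a b z \<and> Vl a b z < \<mu> + \<bar>a\<bar> + \<bar>b\<bar>"
  by (simp add: std_line_def Vl_def)

lemma perp_abs:
  assumes "x \<in> units" "y \<in> units" "x \<noteq> y" "x \<noteq> ng y"
  shows "\<bar>Vl a b x\<bar> + \<bar>Vl a b y\<bar> = \<bar>a\<bar> + \<bar>b\<bar>"
  using assms by (auto simp: units_def ng_def Vl_def)

lemma perp_cover:
  assumes "x \<in> units" "y \<in> units" "x \<noteq> y" "x \<noteq> ng y" "z \<in> units"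
  shows "z = x \<or> z = y \<or> z = ng x \<or> z = ng y"
  using assms by (auto simp: units_def ng_def)

lemma V_ng: "Vl a b (ng m) = - Vl a b m" by (simp add: Vl_def ng_def)

lemma mv_fst: "fst (c (k+1)) = fst (c k) + fst (mv c k)" by (simp add: mv_def)
lemma mv_snd: "snd (c (k+1)) = snd (c k) + snd (mv c k)" by (simp add: mv_def)

lemma const_moves:
  assumes "\<And>i'. x \<le> i' \<Longrightarrow> i' < y \<Longrightarrow> Vl a b (mv c i') = Y" "x \<le> y"
  shows "Vl a b (c y) = Vl a b (c x) + (y - x) * Y"
  using assms(2,1)
proof (induction y rule: int_ge_induct)
  case base then show ?case by simp
next
  case (step y)
  then have "Vl a b (c y) = Vl a b (c x) + (y - x) * Y" by auto
  moreover have "Vl a b (mv c y) = Y" using step by auto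
  ultimately show ?case using V_step[of a b c y] by (simp add: algebra_simps)
qed

lemma mult_ge1_sign:
  fixes r Y :: int assumes "r \<ge> 1"
  shows "(Y \<ge> 0 \<longrightarrow> r * Y \<ge> Y) \<and> (Y \<le> 0 \<longrightarrow> r * Y \<le> Y)"
proof -
  have "(r - 1) * Y \<ge> 0" if "Y \<ge> 0" using assms that by simp
  moreover have "(r - 1) * Y \<le> 0" if "Y \<le> 0" using assms that by (simp add: mult_nonneg_nonpos)
  ultimately show ?thesis by (auto simp: algebra_simps)
qed

lemma no_opp:
  fixes c :: "int \<Rightarrow> pt"
  assumes adj: "\<And>k. i \<le> k \<Longrightarrow> k < j \<Longrightarrow> mv c k \<in> units"
    and inj: "\<And>x y. i \<le> x \<Longrightarrow> x \<le> j \<Longrightarrow> i \<le> y \<Longrightarrow> y \<le> j \<Longrightarrow> c x = c y \<Longrightarrow> x = y"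
    and win: "\<And>k. i \<le> k \<Longrightarrow> k \<le> j \<Longrightarrow> \<mu> \<le> Vl a b (c k) \<and> Vl a b (c k) < \<mu> + \<bar>a\<bar> + \<bar>b\<bar>"
  shows "i \<le> k \<Longrightarrow> k < l \<Longrightarrow> l < j \<Longrightarrow> mv c l \<noteq> ng (mv c k)"
proof (induction "nat (l - k)" arbitrary: k l rule: less_induct)
  case less
  show ?case
  proof
    assume opp: "mv c l = ng (mv c k)"
    consider "l = k+1" | "l \<ge> k+2" using less.prems by linarith
    then show False
    proof cases
      case 1
      have "c (k+2) = c k"
      proof (rule prod_eqI)
        show "fst (c (k+2)) = fst (c k)"
          using mv_fst[of c k] mv_fst[of c "k+1"] opp 1 by (simp add: ng_def add.assoc)
        show "snd (c (k+2)) = snd (c k)"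
          using mv_snd[of c k] mv_snd[of c "k+1"] opp 1 by (simp add: ng_def add.assoc)
      qed
      then have "k + 2 = k" using inj[of "k+2" k] less.prems 1 by linarith
      then show False by simp
    next
      case 2
      define h where "h = mv c (l-1)"
      have IH: "\<And>k' l'. k \<le> k' \<Longrightarrow> k' < l' \<Longrightarrow> l' \<le> l \<Longrightarrow> l' - k' < l - k \<Longrightarrow> mv c l' \<noteq> ng (mv c k')"
        by (rule less.hyps) (use less.prems in auto)
      have u1: "mv c k \<in> units" "h \<in> units" using adj less.prems 2 unfolding h_def by auto
      have ngng: "ng (ng m) = m" for m by (simp add: ng_def)
      have h1: "h \<noteq> ng (mv c k)" unfolding h_def using IH[of k "l-1"] 2 by auto
      have h2: "h \<noteq> mv c k"
      proof
        assume "h = mv c k"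
        then have "mv c l = ng (mv c (l-1))" using opp h_def by simp
        then show False using IH[of "l-1" l] 2 by auto
      qed
      have mid: "mv c i' = h" if "k < i'" "i' < l" for i'
      proof -
        have "mv c i' \<in> units" using adj that less.prems by auto
        moreover have "mv c i' \<noteq> ng (mv c k)" using IH[of k i'] that by auto
        moreover have "mv c i' \<noteq> mv c k"
        proof
          assume "mv c i' = mv c k"
          then have "mv c l = ng (mv c i')" using opp by simp
          then show False using IH[of i' l] that by auto
        qed
        moreover have "mv c i' \<noteq> ng h"
        proof
          assume a: "mv c i' = ng h"
          show False
          proof (cases "i' < l - 1")
            case True
            then have "mv c (l-1) \<noteq> ng (mv c i')" using IH[of i' "l-1"] that by auto
            then show False using a h_def ngng by simp
          next
            case False
            then have "i' = l - 1" using that by simp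
            then have "h = ng h" using a h_def by simp
            then show False using u1 by (auto simp: units_def ng_def)
          qed
        qed
        ultimately show ?thesis using perp_cover[OF u1(1) u1(2)] h2 h1 ngng
          by (metis)
      qed
      define X where "X = Vl a b (mv c k)"
      define Y where "Y = Vl a b h"
      have XY: "\<bar>X\<bar> + \<bar>Y\<bar> = \<bar>a\<bar> + \<bar>b\<bar>"
        unfolding X_def Y_def using perp_abs[OF u1(1) u1(2)] h2 h1 ngng by metis
      have vl: "Vl a b (c l) = Vl a b (c (k+1)) + (l - (k+1)) * Y"
        using const_moves[of "k+1" l a b c Y] mid 2 unfolding Y_def by force
      have vk1: "Vl a b (c (k+1)) = Vl a b (c k) + X" using V_step[of a b c k] X_def by simp
      have vl1: "Vl a b (c (l+1)) = Vl a b (c l) - X" using V_step[of a b c l] opp V_ng X_def by simp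
      have r: "(Y \<ge> 0 \<longrightarrow> (l - (k+1)) * Y \<ge> Y) \<and> (Y \<le> 0 \<longrightarrow> (l - (k+1)) * Y \<le> Y)"
        using mult_ge1_sign[of "l - (k+1)" Y] 2 by simp
      have w1: "\<mu> \<le> Vl a b (c k) \<and> Vl a b (c k) < \<mu> + \<bar>a\<bar> + \<bar>b\<bar>" using win less.prems by auto
      have w2: "\<mu> \<le> Vl a b (c (k+1)) \<and> Vl a b (c (k+1)) < \<mu> + \<bar>a\<bar> + \<bar>b\<bar>" using win less.prems by auto
      have w3: "\<mu> \<le> Vl a b (c l) \<and> Vl a b (c l) < \<mu> + \<bar>a\<bar> + \<bar>b\<bar>" using win less.prems by auto
      have w4: "\<mu> \<le> Vl a b (c (l+1)) \<and> Vl a b (c (l+1)) < \<mu> + \<bar>a\<bar> + \<bar>b\<bar>" using win less.prems by auto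
      define Z where "Z = (l - (k+1)) * Y"
      define W where "W = \<bar>a\<bar> + \<bar>b\<bar>"
      have XY': "\<bar>X\<bar> + \<bar>Y\<bar> = W" using XY W_def by simp
      have r': "(Y \<ge> 0 \<longrightarrow> Z \<ge> Y) \<and> (Y \<le> 0 \<longrightarrow> Z \<le> Y)" using r Z_def by simp
      have ws: "\<mu> \<le> Vl a b (c k) \<and> Vl a b (c k) < \<mu> + W" "\<mu> \<le> Vl a b (c (k+1)) \<and> Vl a b (c (k+1)) < \<mu> + W"
         "\<mu> \<le> Vl a b (c l) \<and> Vl a b (c l) < \<mu> + W" "\<mu> \<le> Vl a b (c (l+1)) \<and> Vl a b (c (l+1)) < \<mu> + W"
        using w1 w2 w3 w4 W_def by (simp_all add: add.assoc)
      have e: "Vl a b (c l) = Vl a b (c (k+1)) + Z" using vl Z_def by simp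
      have "X \<ge> 0 \<or> X < 0" "Y \<ge> 0 \<or> Y < 0" by auto
      then show False
      proof (elim disjE)
        assume "X \<ge> 0" "Y \<ge> 0"
        then have "X + Y = W" using XY' by simp
        then show False using r' ws e vk1 vl1 \<open>Y \<ge> 0\<close> by linarith
      next
        assume "X \<ge> 0" "Y < 0"
        then have "X - Y = W" using XY' by simp
        then show False using r' ws e vk1 vl1 \<open>Y < 0\<close> by linarith
      next
        assume "X < 0" "Y \<ge> 0"
        then have "Y - X = W" using XY' by simp
        then show False using r' ws e vk1 vl1 \<open>Y \<ge> 0\<close> by linarith
      next
        assume "X < 0" "Y < 0"
        then have "- X - Y = W" using XY' by simp
        then show False using r' ws e vk1 vl1 \<open>Y < 0\<close> by linarith
      qed
    qed
  qed
qed


definition perp :: "pt \<Rightarrow> pt \<Rightarrow> bool" where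
  "perp x y \<longleftrightarrow> x \<in> units \<and> y \<in> units \<and> x \<noteq> y \<and> x \<noteq> ng y"

lemma ngng[simp]: "ng (ng m) = m" by (simp add: ng_def)

lemma two_moves:
  fixes c :: "int \<Rightarrow> pt"
  assumes adj: "\<And>k. i \<le> k \<Longrightarrow> k < j \<Longrightarrow> mv c k \<in> units"
    and inj: "\<And>x y. i \<le> x \<Longrightarrow> x \<le> j \<Longrightarrow> i \<le> y \<Longrightarrow> y \<le> j \<Longrightarrow> c x = c y \<Longrightarrow> x = y"
    and win: "\<And>k. i \<le> k \<Longrightarrow> k \<le> j \<Longrightarrow> \<mu> \<le> Vl a b (c k) \<and> Vl a b (c k) < \<mu> + \<bar>a\<bar> + \<bar>b\<bar>"
    and k1: "i \<le> k1" "k1 < j" "Vl a b (mv c k1) > 0"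
    and k2: "i \<le> k2" "k2 < j" "Vl a b (mv c k2) < 0"
  shows "perp (mv c k1) (mv c k2) \<and> Vl a b (mv c k1) - Vl a b (mv c k2) = \<bar>a\<bar> + \<bar>b\<bar> \<and>
         (\<forall>k. i \<le> k \<longrightarrow> k < j \<longrightarrow> mv c k = mv c k1 \<or> mv c k = mv c k2)"
proof -
  have NO: "mv c l \<noteq> ng (mv c k)" if "i \<le> k" "k < l" "l < j" for k l
    using no_opp[where i=i and j=j and c=c and a=a and b=b and \<mu>=\<mu> and k=k and l=l] adj inj win that by blast
  have noop: "mv c k \<noteq> ng (mv c k')" if "i \<le> k" "k < j" "i \<le> k'" "k' < j" "k \<noteq> k'" for k k'
  proof (cases "k < k'")
    case True then show ?thesis using NO[of k k'] that by (metis ngng)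
  next
    case False then show ?thesis using NO[of k' k] that by auto
  qed
  have u: "mv c k1 \<in> units" "mv c k2 \<in> units" using adj k1 k2 by auto
  have ne: "mv c k1 \<noteq> mv c k2" using k1 k2 by auto
  have k12: "k1 \<noteq> k2" using k1 k2 by auto
  have no12: "mv c k1 \<noteq> ng (mv c k2)" using noop[of k1 k2] k1 k2 k12 by auto
  have P: "perp (mv c k1) (mv c k2)" using u ne no12 by (simp add: perp_def)
  have "\<bar>Vl a b (mv c k1)\<bar> + \<bar>Vl a b (mv c k2)\<bar> = \<bar>a\<bar> + \<bar>b\<bar>" using perp_abs[OF u ne no12] .
  then have E: "Vl a b (mv c k1) - Vl a b (mv c k2) = \<bar>a\<bar> + \<bar>b\<bar>" using k1 k2 by simp
  have "mv c k = mv c k1 \<or> mv c k = mv c k2" if "i \<le> k" "k < j" for k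
  proof -
    have "mv c k \<noteq> ng (mv c k1)"
    proof (cases "k = k1")
      case True then show ?thesis using u by (auto simp: units_def ng_def)
    next
      case False then show ?thesis using noop[of k k1] that k1 by auto
    qed
    moreover have "mv c k \<noteq> ng (mv c k2)"
    proof (cases "k = k2")
      case True then show ?thesis using u by (auto simp: units_def ng_def)
    next
      case False then show ?thesis using noop[of k k2] that k2 by auto
    qed
    ultimately show ?thesis using perp_cover[OF u ne no12, of "mv c k"] adj that by auto
  qed
  then show ?thesis using P E by auto
qed

lemma cong_moves:
  assumes "\<And>k. x \<le> k \<Longrightarrow> k < y \<Longrightarrow> mv c k = g1 \<or> mv c k = g2"
    and "Vl a b g1 - Vl a b g2 = w" and "x \<le> y"
  shows "w dvd (Vl a b (c y) - Vl a b (c x) - (y - x) * Vl a b g1)"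
  using assms(3,1)
proof (induction y rule: int_ge_induct)
  case base then show ?case by simp
next
  case (step y)
  then have IH: "w dvd (Vl a b (c y) - Vl a b (c x) - (y - x) * Vl a b g1)" by auto
  have "mv c y = g1 \<or> mv c y = g2" using step by auto
  then show ?case
  proof
    assume "mv c y = g1"
    then have "Vl a b (c (y+1)) - Vl a b (c x) - (y + 1 - x) * Vl a b g1 = Vl a b (c y) - Vl a b (c x) - (y - x) * Vl a b g1"
      using V_step[of a b c y] by (simp add: algebra_simps)
    then show ?thesis using IH by (simp add: algebra_simps)
  next
    assume "mv c y = g2"
    then have "Vl a b (c (y+1)) - Vl a b (c x) - (y + 1 - x) * Vl a b g1 = (Vl a b (c y) - Vl a b (c x) - (y - x) * Vl a b g1) - w"
      using V_step[of a b c y] assms(2) by (simp add: algebra_simps)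
    then show ?thesis using IH by (metis dvd_diff dvd_refl)
  qed
qed

lemma ident_moves:
  assumes "\<And>k. x \<le> k \<Longrightarrow> k < y \<Longrightarrow> mv c k = g1 \<or> mv c k = g2" and "x \<le> y"
  shows "(Vl a b g1 - Vl a b g2) * (Vl a' b' (c y) - Vl a' b' (c x)) - (Vl a' b' g1 - Vl a' b' g2) * (Vl a b (c y) - Vl a b (c x))
         = (y - x) * (Vl a b g1 * Vl a' b' g2 - Vl a b g2 * Vl a' b' g1)"
  using assms(2,1)
proof (induction y rule: int_ge_induct)
  case base then show ?case by simp
next
  case (step y)
  then have IH: "(Vl a b g1 - Vl a b g2) * (Vl a' b' (c y) - Vl a' b' (c x)) - (Vl a' b' g1 - Vl a' b' g2) * (Vl a b (c y) - Vl a b (c x))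
         = (y - x) * (Vl a b g1 * Vl a' b' g2 - Vl a b g2 * Vl a' b' g1)" by auto
  have "mv c y = g1 \<or> mv c y = g2" using step by auto
  then show ?case
    using IH V_step[of a b c y] V_step[of a' b' c y] by (auto simp: algebra_simps)
qed

definition dot :: "pt \<Rightarrow> pt \<Rightarrow> int" where "dot z g = fst z * fst g + snd z * snd g"

lemma perp_decomp:
  assumes "perp g1 g2"
  shows "Vl a b z = dot z g1 * Vl a b g1 + dot z g2 * Vl a b g2"
  using assms by (auto simp: perp_def units_def ng_def dot_def Vl_def)

lemma perp_dot: "perp g1 g2 \<Longrightarrow> dot g1 g1 = 1 \<and> dot g2 g2 = 1 \<and> dot g1 g2 = 0 \<and> dot g2 g1 = 0"
  by (auto simp: perp_def units_def ng_def dot_def)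

lemma perp_V_abs: "perp g1 g2 \<Longrightarrow> \<bar>Vl a b g1\<bar> + \<bar>Vl a b g2\<bar> = \<bar>a\<bar> + \<bar>b\<bar>"
  by (auto simp: perp_def intro: perp_abs)

definition fa :: "pt \<Rightarrow> pt \<Rightarrow> int \<Rightarrow> int \<Rightarrow> int" where
  "fa g1 g2 G1 G2 = G1 * fst g1 + G2 * fst g2"
definition fb :: "pt \<Rightarrow> pt \<Rightarrow> int \<Rightarrow> int \<Rightarrow> int" where
  "fb g1 g2 G1 G2 = - (G1 * snd g1 + G2 * snd g2)"

lemma fab_vals:
  assumes "perp g1 g2"
  shows "Vl (fa g1 g2 G1 G2) (fb g1 g2 G1 G2) g1 = G1" "Vl (fa g1 g2 G1 G2) (fb g1 g2 G1 G2) g2 = G2"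
    "\<bar>fa g1 g2 G1 G2\<bar> + \<bar>fb g1 g2 G1 G2\<bar> = \<bar>G1\<bar> + \<bar>G2\<bar>"
    "coprime G1 G2 \<Longrightarrow> coprime (fa g1 g2 G1 G2) (fb g1 g2 G1 G2)"
  using assms by (auto simp: perp_def units_def ng_def Vl_def fa_def fb_def coprime_commute)

lemma bezout_coprime: fixes x y u v :: int assumes "u * x + v * y = 1" shows "coprime x y"
proof (rule coprimeI)
  fix d assume "d dvd x" "d dvd y"
  then have "d dvd u * x + v * y" by simp
  then show "is_unit d" using assms by simp
qed


definition pd :: "pt \<Rightarrow> pt \<Rightarrow> pt" where "pd x y = (fst x - fst y, snd x - snd y)"

lemma V_pd: "Vl a b (pd x y) = Vl a b x - Vl a b y" by (simp add: Vl_def pd_def algebra_simps)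

lemma V_linear_perp: "perp g1 g2 \<Longrightarrow> Vl a b z = dot z g1 * Vl a b g1 + dot z g2 * Vl a b g2"
  by (rule perp_decomp)

lemma mono_moves:
  assumes "\<And>k. x \<le> k \<Longrightarrow> k < y \<Longrightarrow> Vl a b (mv c k) \<ge> 0" "x \<le> y"
  shows "Vl a b (c x) \<le> Vl a b (c y)"
  using assms(2,1)
proof (induction y rule: int_ge_induct)
  case base then show ?case by simp
next
  case (step y)
  then show ?case using V_step[of a b c y] by fastforce
qed

lemma neg_move_exists:
  assumes "Vl a b (c y) < Vl a b (c x)" "x \<le> y"
  shows "\<exists>k. x \<le> k \<and> k < y \<and> Vl a b (mv c k) < 0"
proof (rule ccontr)
  assume "\<not> ?thesis"
  then have "Vl a b (c x) \<le> Vl a b (c y)" using mono_moves[of x y a b c] assms(2) by force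
  then show False using assms by simp
qed

lemma dvd_small: fixes w x :: int assumes "w dvd x" "0 \<le> x" "x < w" shows "x = 0"
proof (rule ccontr)
  assume "x \<noteq> 0" then have "0 < x" using assms by simp
  then show False using zdvd_not_zless[OF _ assms(3)] assms(1) by simp
qed

lemma dvd_small2: fixes w x :: int assumes "w dvd x" "- w < x" "x < w" shows "x = 0"
proof (cases "x \<ge> 0")
  case True then show ?thesis using dvd_small assms by simp
next
  case False
  then have "- x = 0" using dvd_small[of w "- x"] assms by simp
  then show ?thesis by simp
qed

lemma V_neg: "Vl (-a) (-b) z = - Vl a b z" by (simp add: Vl_def)

lemma pivot:
  fixes c :: "int \<Rightarrow> pt"
  assumes moves: "\<And>k. m \<le> k \<Longrightarrow> k < e \<Longrightarrow> mv c k = g1 \<or> mv c k = g2"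
    and P: "perp g1 g2"
    and A: "Vl a b g1 = A" "Vl a b g2 = - B" "A \<ge> 1" "B \<ge> 1" "A + B = w"
    and win: "\<And>k. m < k \<Longrightarrow> k \<le> e \<Longrightarrow> \<mu> \<le> Vl a b (c k) \<and> Vl a b (c k) < \<mu> + w"
    and M: "Vl a b (c m) = \<mu> - 1"
    and piv: "m < \<pi>" "\<pi> \<le> e" "Vl a b (c \<pi>) = \<mu>" "\<And>k. \<pi> < k \<Longrightarrow> k \<le> e \<Longrightarrow> Vl a b (c k) \<noteq> \<mu>"
  shows "\<exists>a'' b'' \<mu>''. coprime a'' b'' \<and> c ` {m..e} \<subseteq> std_line a'' b'' \<mu>''"
proof -
  define D where "D = pd (c \<pi>) (c m)"
  define n1 where "n1 = dot D g1"
  define n2 where "n2 = dot D g2"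
  have VD: "Vl a b D = 1" using V_pd[of a b "c \<pi>" "c m"] M piv by (simp add: D_def)
  have "Vl a b D = n1 * A + n2 * (- B)" using perp_decomp[OF P, of a b D] A by (simp add: n1_def n2_def)
  then have bez: "A * n1 - B * n2 = 1" using VD by (simp add: algebra_simps)
  have cop: "coprime n2 (- n1)"
    using bezout_coprime[of "- B" n2 "- A" "- n1"] bez by (simp add: algebra_simps)
  define a2 where "a2 = fa g1 g2 n2 (- n1)"
  define b2 where "b2 = fb g1 g2 n2 (- n1)"
  have L1: "Vl a2 b2 g1 = n2" "Vl a2 b2 g2 = - n1" "\<bar>a2\<bar> + \<bar>b2\<bar> = \<bar>n2\<bar> + \<bar>n1\<bar>" "coprime a2 b2"
    using fab_vals[OF P, of n2 "- n1"] cop by (simp_all add: a2_def b2_def)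
  have "Vl a2 b2 D = n1 * n2 + n2 * (- n1)" using perp_decomp[OF P, of a2 b2 D] L1 by (simp add: n1_def n2_def)
  then have LD: "Vl a2 b2 (c \<pi>) = Vl a2 b2 (c m)" using V_pd[of a2 b2 "c \<pi>" "c m"] by (simp add: D_def)
  have id: "w * (Vl a2 b2 (c k) - Vl a2 b2 (c m)) - (n2 + n1) * (Vl a b (c k) - Vl a b (c m)) = - (k - m)"
    if "m \<le> k" "k \<le> e" for k
  proof -
    have "(Vl a b g1 - Vl a b g2) * (Vl a2 b2 (c k) - Vl a2 b2 (c m)) - (Vl a2 b2 g1 - Vl a2 b2 g2) * (Vl a b (c k) - Vl a b (c m))
         = (k - m) * (Vl a b g1 * Vl a2 b2 g2 - Vl a b g2 * Vl a2 b2 g1)"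
      by (rule ident_moves) (use moves that in auto)
    moreover have "Vl a b g1 * Vl a2 b2 g2 - Vl a b g2 * Vl a2 b2 g1 = -1"
      using A(1,2) L1(1,2) bez by (simp add: algebra_simps)
    moreover have "Vl a b g1 - Vl a b g2 = w" "Vl a2 b2 g1 - Vl a2 b2 g2 = n2 + n1" using A L1 by simp_all
    ultimately show ?thesis by simp
  qed
  have K: "n1 + n2 = \<pi> - m" using id[of \<pi>] piv LD M by (simp add: algebra_simps)
  have w2: "w \<ge> 2" using A by simp
  have cong: "w dvd (Vl a b (c y) - Vl a b (c x) - (y - x) * A)" if "m \<le> x" "x \<le> y" "y \<le> e" for x y
    using cong_moves[of x y c g1 g2 a b w] moves that A by auto
  have after: "k < \<pi> + w" if "\<pi> < k" "k \<le> e" for k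
  proof (rule ccontr)
    assume "\<not> k < \<pi> + w"
    then have le: "\<pi> + w \<le> e" using that by simp
    have "w dvd (Vl a b (c (\<pi> + w)) - Vl a b (c \<pi>) - w * A)" using cong[of \<pi> "\<pi> + w"] piv le w2 by simp
    moreover have "Vl a b (c (\<pi> + w)) - \<mu> = (Vl a b (c (\<pi> + w)) - Vl a b (c \<pi>) - w * A) + w * A" using piv by simp
    ultimately have "w dvd (Vl a b (c (\<pi> + w)) - \<mu>)" by (metis dvd_add dvd_triv_left)
    moreover have "\<mu> \<le> Vl a b (c (\<pi> + w)) \<and> Vl a b (c (\<pi> + w)) < \<mu> + w" using win[of "\<pi> + w"] piv le w2 by simp
    ultimately have "Vl a b (c (\<pi> + w)) - \<mu> = 0" using dvd_small[of w "Vl a b (c (\<pi> + w)) - \<mu>"] by linarith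
    then have "Vl a b (c (\<pi> + w)) = \<mu>" by simp
    then show False using piv(4)[of "\<pi> + w"] le w2 by simp
  qed
  define Kp where "Kp = \<pi> - m"
  have Kp1: "Kp \<ge> 1" using piv Kp_def by simp
  have main: "0 \<le> Vl a2 b2 (c k) - Vl a2 b2 (c m) \<and> Vl a2 b2 (c k) - Vl a2 b2 (c m) < Kp" if "m \<le> k" "k \<le> e" for k
  proof (cases "k = m")
    case True then show ?thesis using Kp1 by simp
  next
    case False
    then have km: "m < k" using that by simp
    define u where "u = Vl a b (c k) - \<mu> + 1"
    have u: "1 \<le> u" "u \<le> w" using win[of k] km that u_def by auto
    define L where "L = Vl a2 b2 (c k) - Vl a2 b2 (c m)"
    have d1: "Vl a b (c k) - Vl a b (c m) = u" using M u_def by simp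
    have d2: "n2 + n1 = Kp" using K Kp_def by simp
    have d3: "Vl a2 b2 (c k) - Vl a2 b2 (c m) = L" using L_def by simp
    have "w * L - Kp * u = - (k - m)" using id[of k] that unfolding d1 d2 d3 by simp
    then have eq: "w * L = Kp * u - (k - m)" by simp
    have up: "Kp * u \<le> Kp * w" using u Kp1 by (simp add: mult_left_mono)
    have lo1: "Kp * u \<ge> Kp * 1" using u Kp1 by (intro mult_left_mono) auto
    have lowr: "Kp * u - (k - m) \<ge> 0"
    proof (cases "k \<le> \<pi>")
      case True then show ?thesis using lo1 Kp_def by simp
    next
      case False
      then have kp: "\<pi> < k" by simp
      have j: "k - \<pi> < w" using after[OF kp that(2)] by simp
      have u2: "u \<ge> 2" using piv(4)[OF kp that(2)] u u_def by auto
      have lo2: "Kp * (u - 1) \<ge> Kp * 1" using u2 Kp1 by (intro mult_left_mono) auto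
      have "Kp * (u - 1) = Kp * u - Kp" by (simp add: algebra_simps)
      then have "Kp * (u - 1) - (k - \<pi>) = w * L" using eq Kp_def by linarith
      then have dv: "w dvd (Kp * (u - 1) - (k - \<pi>))" by simp
      show ?thesis
      proof (rule ccontr)
        assume "\<not> ?thesis"
        moreover have "Kp * (u - 1) = Kp * u - Kp" by (simp add: algebra_simps)
        ultimately have neg: "Kp * (u - 1) - (k - \<pi>) < 0" using Kp_def by linarith
        have "Kp * (u - 1) - (k - \<pi>) > - w" using lo2 j Kp1 by linarith
        then have "Kp * (u - 1) - (k - \<pi>) = 0" using neg dv dvd_small2[of w "Kp * (u - 1) - (k - \<pi>)"] by linarith
        then show False using neg by simp
      qed
    qed
    have "0 \<le> w * L" using eq lowr by simp
    then have "0 \<le> L" using w2 by (simp add: zero_le_mult_iff)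
    moreover have "w * L < w * Kp" using eq up km by (simp add: algebra_simps)
    then have "L < Kp" using w2 by simp
    ultimately show ?thesis using L_def by simp
  qed
  have Kw: "Kp \<le> \<bar>a2\<bar> + \<bar>b2\<bar>" using L1(3) K Kp_def by simp
  have "c ` {m..e} \<subseteq> std_line a2 b2 (Vl a2 b2 (c m))"
  proof
    fix z assume "z \<in> c ` {m..e}"
    then obtain k where k: "m \<le> k" "k \<le> e" "z = c k" by auto
    show "z \<in> std_line a2 b2 (Vl a2 b2 (c m))" using main[OF k(1,2)] Kw k(3) by (simp add: std_line_iff)
  qed
  then show ?thesis using L1(4) by blast
qed


lemma balance:
  fixes c :: "int \<Rightarrow> pt"
  assumes moves: "\<And>k. m \<le> k \<Longrightarrow> k < e \<Longrightarrow> mv c k = g1 \<or> mv c k = g2"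
    and P: "perp g1 g2"
    and A: "Vl a b g1 = A" "Vl a b g2 = - B" "A \<ge> 1" "B \<ge> 1" "A + B = w"
    and win: "\<And>k. m < k \<Longrightarrow> k \<le> e \<Longrightarrow> \<mu> \<le> Vl a b (c k) \<and> Vl a b (c k) < \<mu> + w"
    and M: "Vl a b (c m) = \<mu> - d" "2 \<le> d" "d \<le> A" "mv c m = g1"
    and r1: "m < r1" "Vl a b (c r1) = \<mu> + w - 1"
    and P2: "r1 < P2" "P2 \<le> e" "Vl a b (c P2) = \<mu>"
    and L': "\<And>k. m \<le> k \<Longrightarrow> k \<le> e \<Longrightarrow> \<mu>' \<le> Vl a' b' (c k) \<and> Vl a' b' (c k) < \<mu>' + \<bar>a'\<bar> + \<bar>b'\<bar>"
  shows False
proof -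
  define l where "l = r1 - m"
  define x2 where "x2 = P2 - l"
  have x2m: "m < x2" "x2 \<le> P2" using P2 r1 l_def x2_def by auto
  have cong: "w dvd (Vl a b (c y) - Vl a b (c x) - (y - x) * A)" if "m \<le> x" "x \<le> y" "y \<le> e" for x y
    using cong_moves[of x y c g1 g2 a b w] moves that A by auto
  define d1 where "d1 = Vl a b (c r1) - Vl a b (c m)"
  define d2 where "d2 = Vl a b (c P2) - Vl a b (c x2)"
  have d1v: "d1 = w - 1 + d" using d1_def r1 M by simp
  have c1: "w dvd (d1 - l * A)" using cong[of m r1] r1 P2 l_def d1_def by simp
  have c2: "w dvd (d2 - l * A)" using cong[of x2 P2] x2m P2 l_def x2_def d2_def by simp
  have "w dvd ((d1 - l * A) - (d2 - l * A))" using c1 c2 by (rule dvd_diff)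
  then have "w dvd (d1 - d2)" by simp
  then have "w dvd ((d1 - d2) - 2 * w)" by (simp add: dvd_diff)
  moreover have wx2: "\<mu> \<le> Vl a b (c x2) \<and> Vl a b (c x2) < \<mu> + w" using win x2m P2 by auto
  moreover have "- w < (d1 - d2) - 2 * w" "(d1 - d2) - 2 * w < w" using wx2 d1v d2_def P2 M A by linarith+
  ultimately have "(d1 - d2) - 2 * w = 0" using dvd_small2[of w "(d1 - d2) - 2 * w"] by blast
  then have d2v: "d2 = d - 1 - w" using d1v by simp
  define G where "G = Vl a' b' g1 - Vl a' b' g2"
  define K0 where "K0 = Vl a b g1 * Vl a' b' g2 - Vl a b g2 * Vl a' b' g1"
  have i1: "w * (Vl a' b' (c r1) - Vl a' b' (c m)) - G * d1 = l * K0"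
  proof -
    have "(Vl a b g1 - Vl a b g2) * (Vl a' b' (c r1) - Vl a' b' (c m)) - (Vl a' b' g1 - Vl a' b' g2) * (Vl a b (c r1) - Vl a b (c m))
         = (r1 - m) * (Vl a b g1 * Vl a' b' g2 - Vl a b g2 * Vl a' b' g1)"
      by (rule ident_moves) (use moves r1 P2 in auto)
    then show ?thesis using A by (simp add: G_def K0_def d1_def l_def)
  qed
  have i2: "w * (Vl a' b' (c P2) - Vl a' b' (c x2)) - G * d2 = l * K0"
  proof -
    have "(Vl a b g1 - Vl a b g2) * (Vl a' b' (c P2) - Vl a' b' (c x2)) - (Vl a' b' g1 - Vl a' b' g2) * (Vl a b (c P2) - Vl a b (c x2))
         = (P2 - x2) * (Vl a b g1 * Vl a' b' g2 - Vl a b g2 * Vl a' b' g1)"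
      by (rule ident_moves) (use moves x2m P2 in auto)
    moreover have "P2 - x2 = l" using x2_def by simp
    ultimately show ?thesis using A by (simp add: G_def K0_def d2_def)
  qed
  define e1 where "e1 = Vl a' b' (c r1) - Vl a' b' (c m)"
  define e2 where "e2 = Vl a' b' (c P2) - Vl a' b' (c x2)"
  have "w * (e1 - e2) = G * (d1 - d2)" using i1 i2 unfolding e1_def e2_def by (simp add: algebra_simps)
  also have "d1 - d2 = 2 * w" using d1v d2v by simp
  finally have "w * (e1 - e2) = w * (2 * G)" by (simp add: algebra_simps)
  then have E: "e1 - e2 = 2 * G" using A by simp
  define W where "W = \<bar>a'\<bar> + \<bar>b'\<bar>"
  have ab: "\<bar>Vl a' b' g1\<bar> + \<bar>Vl a' b' g2\<bar> = W" using perp_V_abs[OF P] W_def by simp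
  have we1: "\<bar>e1\<bar> < W" using L'[of r1] L'[of m] r1 P2 e1_def W_def by auto
  have we2: "\<bar>e2\<bar> < W" using L'[of P2] L'[of x2] x2m P2 e2_def W_def by auto
  have sgn: "\<not> (Vl a' b' g1 * Vl a' b' g2 \<le> 0)"
  proof
    assume "Vl a' b' g1 * Vl a' b' g2 \<le> 0"
    then have "\<bar>G\<bar> = W" using ab unfolding G_def by (auto simp: abs_if mult_le_0_iff)
    then show False using E we1 we2 by linarith
  qed
  have "d2 < 0" using d2v A M by linarith
  then obtain k2 where k2: "x2 \<le> k2" "k2 < P2" "Vl a b (mv c k2) < 0"
    using neg_move_exists[of a b c P2 x2] x2m d2_def by auto
  have mk2: "mv c k2 = g2" using moves[of k2] k2 x2m P2 A by auto
  have mm: "mv c m = g1" using M by simp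
  have "m + 1 \<le> k2" using k2 x2m by simp
  show False
  proof (cases "Vl a' b' g1 > 0")
    case True
    then have pos: "Vl a' b' g2 > 0" using sgn by (auto simp: mult_le_0_iff)
    have nn: "Vl a' b' (mv c k) \<ge> 0" if "m \<le> k" "k < e" for k using moves[OF that] True pos by auto
    have s1: "Vl a' b' (c (m+1)) \<le> Vl a' b' (c k2)" using mono_moves[of "m+1" k2 a' b' c] nn \<open>m + 1 \<le> k2\<close> k2 P2 by auto
    have s2: "Vl a' b' (c (k2+1)) \<le> Vl a' b' (c P2)" using mono_moves[of "k2+1" P2 a' b' c] nn k2 x2m P2 by auto
    have t1: "Vl a' b' (c (m+1)) = Vl a' b' (c m) + Vl a' b' g1" using V_step[of a' b' c m] mm by simp
    have t2: "Vl a' b' (c (k2+1)) = Vl a' b' (c k2) + Vl a' b' g2" using V_step[of a' b' c k2] mk2 by simp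
    have "Vl a' b' g1 + Vl a' b' g2 = W" using ab True pos by simp
    then show False using s1 s2 t1 t2 L'[of m] L'[of P2] x2m P2 r1 W_def by auto
  next
    case False
    then have neg1: "Vl a' b' g1 < 0" using sgn by (cases "Vl a' b' g1 = 0") auto
    then have neg2: "Vl a' b' g2 < 0" using sgn by (auto simp: mult_le_0_iff)
    have nn: "Vl (-a') (-b') (mv c k) \<ge> 0" if "m \<le> k" "k < e" for k using moves[OF that] neg1 neg2 V_neg by auto
    have s1: "Vl (-a') (-b') (c (m+1)) \<le> Vl (-a') (-b') (c k2)" using mono_moves[of "m+1" k2 "-a'" "-b'" c] nn \<open>m + 1 \<le> k2\<close> k2 P2 by auto
    have s2: "Vl (-a') (-b') (c (k2+1)) \<le> Vl (-a') (-b') (c P2)" using mono_moves[of "k2+1" P2 "-a'" "-b'" c] nn k2 x2m P2 by auto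
    have t1: "Vl a' b' (c (m+1)) = Vl a' b' (c m) + Vl a' b' g1" using V_step[of a' b' c m] mm by simp
    have t2: "Vl a' b' (c (k2+1)) = Vl a' b' (c k2) + Vl a' b' g2" using V_step[of a' b' c k2] mk2 by simp
    have "- Vl a' b' g1 - Vl a' b' g2 = W" using ab neg1 neg2 by simp
    then show False using s1 s2 t1 t2 L'[of m] L'[of P2] x2m P2 r1 W_def by (auto simp: V_neg)
  qed
qed


lemma units_cases: "m \<in> units \<Longrightarrow> m = (1,0) \<or> m = (-1,0) \<or> m = (0,1) \<or> m = (0,-1)"
  by (simp add: units_def)

lemma perp_sym: assumes "perp g1 g2" shows "perp g2 g1"
proof -
  have "g1 \<in> units" "g2 \<in> units" "g1 \<noteq> g2" "g1 \<noteq> ng g2" using assms by (simp_all add: perp_def)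
  moreover have "g1 = (1,0) \<or> g1 = (-1,0) \<or> g1 = (0,1) \<or> g1 = (0,-1)" using units_cases \<open>g1 \<in> units\<close> by blast
  moreover have "g2 = (1,0) \<or> g2 = (-1,0) \<or> g2 = (0,1) \<or> g2 = (0,-1)" using units_cases \<open>g2 \<in> units\<close> by blast
  ultimately show ?thesis unfolding perp_def
    by (elim disjE; simp add: ng_def units_def)
qed

lemma perp_V_cases: assumes "perp g1 g2"
  shows "(\<bar>Vl a b g1\<bar> = \<bar>a\<bar> \<and> \<bar>Vl a b g2\<bar> = \<bar>b\<bar>) \<or> (\<bar>Vl a b g1\<bar> = \<bar>b\<bar> \<and> \<bar>Vl a b g2\<bar> = \<bar>a\<bar>)"
proof -
  have "g1 \<in> units" "g2 \<in> units" "g1 \<noteq> g2" "g1 \<noteq> ng g2" using assms by (simp_all add: perp_def)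
  moreover have "g1 = (1,0) \<or> g1 = (-1,0) \<or> g1 = (0,1) \<or> g1 = (0,-1)" using units_cases \<open>g1 \<in> units\<close> by blast
  moreover have "g2 = (1,0) \<or> g2 = (-1,0) \<or> g2 = (0,1) \<or> g2 = (0,-1)" using units_cases \<open>g2 \<in> units\<close> by blast
  ultimately show ?thesis
    by (elim disjE; simp add: ng_def Vl_def)
qed

lemma units_V: "m \<in> units \<Longrightarrow> \<bar>Vl a b m\<bar> = \<bar>a\<bar> \<or> \<bar>Vl a b m\<bar> = \<bar>b\<bar>"
  by (auto simp: units_def Vl_def)

lemma coprime_sum: fixes A B :: int assumes "coprime A B" shows "coprime A (A + B)"
proof (rule coprimeI)
  fix d assume "d dvd A" "d dvd A + B"
  then have "d dvd B" by (metis add_diff_cancel_left' dvd_diff)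
  then show "is_unit d" using assms \<open>d dvd A\<close> by (meson coprime_common_divisor)
qed

lemma coprime_w1: fixes a b :: int assumes "coprime a b" shows "\<bar>a\<bar> + \<bar>b\<bar> \<ge> 1"
proof (rule ccontr)
  assume "\<not> ?thesis" then have "a = 0" "b = 0" by auto
  then show False using assms by simp
qed

lemma coprime_w2: fixes a b :: int assumes "coprime a b" "\<bar>a\<bar> + \<bar>b\<bar> \<ge> 2" shows "a \<noteq> 0" "b \<noteq> 0"
proof -
  show "a \<noteq> 0"
  proof
    assume "a = 0" then have "is_unit b" using assms(1) by simp
    then have "\<bar>b\<bar> = 1" using zdvd1_eq by blast
    then show False using assms(2) \<open>a = 0\<close> by simp
  qed
  show "b \<noteq> 0"
  proof
    assume "b = 0" then have "is_unit a" using assms(1) by simp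
    then have "\<bar>a\<bar> = 1" using zdvd1_eq by blast
    then show False using assms(2) \<open>b = 0\<close> by simp
  qed
qed

lemma S_struct:
  fixes c :: "int \<Rightarrow> pt"
  assumes adj: "\<And>k. s1 \<le> k \<Longrightarrow> k < t1 \<Longrightarrow> mv c k \<in> units"
    and inj: "\<And>x y. s1 \<le> x \<Longrightarrow> x \<le> t1 \<Longrightarrow> s1 \<le> y \<Longrightarrow> y \<le> t1 \<Longrightarrow> c x = c y \<Longrightarrow> x = y"
    and cop: "coprime a b"
    and S: "\<And>k. s1 \<le> k \<Longrightarrow> k \<le> t1 \<Longrightarrow> c k \<in> std_line a b \<mu>"
    and pq: "s1 \<le> p" "p < q" "q \<le> t1" "Vl a b (c p) = \<mu>" "Vl a b (c q) = \<mu>"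
    and w2: "\<bar>a\<bar> + \<bar>b\<bar> \<ge> 2"
  shows "\<exists>g1 g2 A B. perp g1 g2 \<and> Vl a b g1 = A \<and> Vl a b g2 = - B \<and> A \<ge> 1 \<and> B \<ge> 1 \<and>
     A + B = \<bar>a\<bar> + \<bar>b\<bar> \<and> coprime A (\<bar>a\<bar> + \<bar>b\<bar>) \<and>
     (\<forall>k. s1 \<le> k \<longrightarrow> k < t1 \<longrightarrow> mv c k = g1 \<or> mv c k = g2) \<and>
     (\<exists>k. p \<le> k \<and> k < q \<and> mv c k = g1) \<and> (\<exists>k. p \<le> k \<and> k < q \<and> mv c k = g2)"
proof -
  have win: "\<mu> \<le> Vl a b (c k) \<and> Vl a b (c k) < \<mu> + \<bar>a\<bar> + \<bar>b\<bar>" if "s1 \<le> k" "k \<le> t1" for k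
    using S[OF that] by (simp add: std_line_iff)
  have nz: "a \<noteq> 0" "b \<noteq> 0" using coprime_w2[OF cop w2] by blast+
  have mvnz: "Vl a b (mv c k) \<noteq> 0" if "s1 \<le> k" "k < t1" for k
  proof -
    have "\<bar>Vl a b (mv c k)\<bar> = \<bar>a\<bar> \<or> \<bar>Vl a b (mv c k)\<bar> = \<bar>b\<bar>" using units_V[OF adj[OF that]] .
    then show ?thesis using nz by force
  qed
  have "\<exists>k1 k2. p \<le> k1 \<and> k1 < q \<and> Vl a b (mv c k1) > 0 \<and> p \<le> k2 \<and> k2 < q \<and> Vl a b (mv c k2) < 0"
  proof (cases "Vl a b (mv c p) > 0")
    case True
    then have "Vl a b (c q) < Vl a b (c (p+1))" using V_step[of a b c p] pq by simp
    then obtain k where "p + 1 \<le> k" "k < q" "Vl a b (mv c k) < 0" using neg_move_exists[of a b c q "p+1"] pq by force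
    then show ?thesis using True pq by (intro exI[of _ p] exI[of _ k]) auto
  next
    case False
    then have neg: "Vl a b (mv c p) < 0" using mvnz[of p] pq by auto
    then have "Vl (-a) (-b) (c q) < Vl (-a) (-b) (c (p+1))" using V_step[of a b c p] pq by (simp add: V_neg)
    then obtain k where "p + 1 \<le> k" "k < q" "Vl (-a) (-b) (mv c k) < 0" using neg_move_exists[of "-a" "-b" c q "p+1"] pq by force
    then show ?thesis using neg pq by (intro exI[of _ k] exI[of _ p]) (auto simp: V_neg)
  qed
  then obtain k1 k2 where k: "p \<le> k1" "k1 < q" "Vl a b (mv c k1) > 0" "p \<le> k2" "k2 < q" "Vl a b (mv c k2) < 0" by blast
  have T: "perp (mv c k1) (mv c k2) \<and> Vl a b (mv c k1) - Vl a b (mv c k2) = \<bar>a\<bar> + \<bar>b\<bar> \<and>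
         (\<forall>k. s1 \<le> k \<longrightarrow> k < t1 \<longrightarrow> mv c k = mv c k1 \<or> mv c k = mv c k2)"
  proof (rule two_moves[where \<mu>=\<mu>])
    show "\<And>k. s1 \<le> k \<Longrightarrow> k < t1 \<Longrightarrow> mv c k \<in> units" by (rule adj)
    show "\<And>x y. s1 \<le> x \<Longrightarrow> x \<le> t1 \<Longrightarrow> s1 \<le> y \<Longrightarrow> y \<le> t1 \<Longrightarrow> c x = c y \<Longrightarrow> x = y" by (rule inj)
    show "\<And>k. s1 \<le> k \<Longrightarrow> k \<le> t1 \<Longrightarrow> \<mu> \<le> Vl a b (c k) \<and> Vl a b (c k) < \<mu> + \<bar>a\<bar> + \<bar>b\<bar>" by (rule win)
  qed (use k pq in linarith)+
  define A where "A = Vl a b (mv c k1)"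
  define B where "B = - Vl a b (mv c k2)"
  have Apos: "A > 0" "B > 0" using k A_def B_def by auto
  have cab1: "coprime \<bar>a\<bar> \<bar>b\<bar>" using cop by simp
  have cab2: "coprime \<bar>b\<bar> \<bar>a\<bar>" using cab1 coprime_commute by blast
  have "(A = \<bar>a\<bar> \<and> B = \<bar>b\<bar>) \<or> (A = \<bar>b\<bar> \<and> B = \<bar>a\<bar>)"
    using perp_V_cases[of "mv c k1" "mv c k2" a b] T Apos unfolding A_def B_def by auto
  then have AB: "coprime A B" using cab1 cab2 by (elim disjE conjE) simp_all
  have cAB: "coprime A (A + B)" using coprime_sum[OF AB] .
  have sAB: "A + B = \<bar>a\<bar> + \<bar>b\<bar>" using T A_def B_def by simp
  have "perp (mv c k1) (mv c k2) \<and> Vl a b (mv c k1) = A \<and> Vl a b (mv c k2) = - B \<and> A \<ge> 1 \<and> B \<ge> 1 \<and>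
     A + B = \<bar>a\<bar> + \<bar>b\<bar> \<and> coprime A (\<bar>a\<bar> + \<bar>b\<bar>) \<and>
     (\<forall>k. s1 \<le> k \<longrightarrow> k < t1 \<longrightarrow> mv c k = mv c k1 \<or> mv c k = mv c k2) \<and>
     (\<exists>k. p \<le> k \<and> k < q \<and> mv c k = mv c k1) \<and> (\<exists>k. p \<le> k \<and> k < q \<and> mv c k = mv c k2)"
  proof (intro conjI)
    show "Vl a b (mv c k1) = A" "Vl a b (mv c k2) = - B" using A_def B_def by simp_all
    show "A \<ge> 1" "B \<ge> 1" using Apos by simp_all
    show "perp (mv c k1) (mv c k2)" using T by blast
    show "\<forall>k. s1 \<le> k \<longrightarrow> k < t1 \<longrightarrow> mv c k = mv c k1 \<or> mv c k = mv c k2" using T by blast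
    show "\<exists>k. p \<le> k \<and> k < q \<and> mv c k = mv c k1" using k by blast
    show "\<exists>k. p \<le> k \<and> k < q \<and> mv c k = mv c k2" using k by blast
  qed (use cAB sAB in simp_all)
  then show ?thesis by blast
qed


lemma S_cong:
  assumes moves: "\<And>k. s1 \<le> k \<Longrightarrow> k < t1 \<Longrightarrow> mv c k = g1 \<or> mv c k = g2"
    and "Vl a b g1 - Vl a b g2 = w"
    and "s1 \<le> x" "x \<le> t1" "s1 \<le> y" "y \<le> t1"
  shows "w dvd (Vl a b (c y) - Vl a b (c x) - (y - x) * Vl a b g1)"
proof (cases "x \<le> y")
  case True
  show ?thesis using cong_moves[of x y c g1 g2 a b w] moves assms True by auto
next
  case False
  have "w dvd (Vl a b (c x) - Vl a b (c y) - (x - y) * Vl a b g1)"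
    using cong_moves[of y x c g1 g2 a b w] moves assms False by auto
  moreover have "Vl a b (c y) - Vl a b (c x) - (y - x) * Vl a b g1 = - (Vl a b (c x) - Vl a b (c y) - (x - y) * Vl a b g1)"
    by (simp add: algebra_simps)
  ultimately show ?thesis by (metis dvd_minus_iff)
qed

lemma upper_iff:
  fixes w A :: int
  assumes moves: "\<And>k. s1 \<le> k \<Longrightarrow> k < t1 \<Longrightarrow> mv c k = g1 \<or> mv c k = g2"
    and VA: "Vl a b g1 = A" "Vl a b g1 - Vl a b g2 = w" "coprime A w"
    and win: "\<And>k. s1 \<le> k \<Longrightarrow> k \<le> t1 \<Longrightarrow> \<mu> \<le> Vl a b (c k) \<and> Vl a b (c k) < \<mu> + w"
    and p: "s1 \<le> p" "p \<le> t1" "Vl a b (c p) = \<mu>"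
    and k: "s1 \<le> k" "k \<le> t1"
  shows "Vl a b (c k) = \<mu> \<longleftrightarrow> w dvd (k - p)"
proof -
  have cg: "w dvd (Vl a b (c k) - \<mu> - (k - p) * A)"
    using S_cong[OF moves VA(2) p(1,2) k] p VA by simp
  have cw: "coprime w A" using VA(3) by (simp add: coprime_commute)
  show ?thesis
  proof
    assume "Vl a b (c k) = \<mu>"
    then have "w dvd (- ((k - p) * A))" using cg by simp
    then have "w dvd ((k - p) * A)" by simp
    then show "w dvd (k - p)" using coprime_dvd_mult_left_iff[OF cw] by blast
  next
    assume "w dvd (k - p)"
    then have "w dvd ((k - p) * A)" by simp
    then have "w dvd (Vl a b (c k) - \<mu>)" using cg by (metis diff_add_cancel dvd_add)
    moreover have "0 \<le> Vl a b (c k) - \<mu>" "Vl a b (c k) - \<mu> < w" using win[OF k] by simp_all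
    ultimately have "Vl a b (c k) - \<mu> = 0" using dvd_small by blast
    then show "Vl a b (c k) = \<mu>" by simp
  qed
qed

lemma lower_exists:
  fixes w A :: int
  assumes moves: "\<And>k. s1 \<le> k \<Longrightarrow> k < t1 \<Longrightarrow> mv c k = g1 \<or> mv c k = g2"
    and VA: "Vl a b g1 = A" "Vl a b g1 - Vl a b g2 = w" "coprime A w" "w \<ge> 1"
    and win: "\<And>k. s1 \<le> k \<Longrightarrow> k \<le> t1 \<Longrightarrow> \<mu> \<le> Vl a b (c k) \<and> Vl a b (c k) < \<mu> + w"
    and p: "s1 \<le> p" "p + w - 1 \<le> t1" "Vl a b (c p) = \<mu>"
  shows "\<exists>r. p \<le> r \<and> r < p + w \<and> Vl a b (c r) = \<mu> + w - 1"
proof -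
  obtain u v where uv: "u * A + v * w = gcd A w" using bezout_int by blast
  then have uv1: "u * A + v * w = 1" using VA(3) by simp
  define x where "x = (- u) mod w"
  have x: "0 \<le> x" "x < w" using VA(4) x_def by simp_all
  define r where "r = p + x"
  have r: "s1 \<le> r" "r \<le> t1" "p \<le> r" "r < p + w" using x p r_def by auto
  have cg: "w dvd (Vl a b (c r) - \<mu> - x * A)"
    using S_cong[OF moves VA(2) _ _ r(1,2), of p] p VA r_def by simp
  have "w dvd ((- u) - x)" unfolding x_def by (simp add: mod_eq_dvd_iff)
  then have "w dvd (((- u) - x) * A)" by simp
  moreover have "((- u) - x) * A = - (u * A) - x * A" by (simp add: algebra_simps)
  ultimately have "w dvd (v * w - 1 - x * A)" using uv1 by (metis diff_add_cancel add.commute minus_diff_eq diff_minus_eq_add uminus_add_conv_diff)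
  then have "w dvd ((Vl a b (c r) - \<mu> - x * A) - (v * w - 1 - x * A))" using cg by (rule dvd_diff[rotated])
  moreover have "w dvd (v * w - w)" by simp
  ultimately have "w dvd ((Vl a b (c r) - \<mu> - x * A) - (v * w - 1 - x * A) + (v * w - w))" by (rule dvd_add)
  then have "w dvd ((Vl a b (c r) - \<mu> - x * A) - (v * w - 1 - x * A) + v * w - w)" by (simp add: algebra_simps)
  moreover have "(Vl a b (c r) - \<mu> - x * A) - (v * w - 1 - x * A) + v * w - w = Vl a b (c r) - (\<mu> + w - 1)"
    by (simp add: algebra_simps)
  ultimately have d: "w dvd (Vl a b (c r) - (\<mu> + w - 1))" by metis
  have "- w < Vl a b (c r) - (\<mu> + w - 1)" "Vl a b (c r) - (\<mu> + w - 1) < w" using win[OF r(1,2)] by linarith+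
  then have "Vl a b (c r) - (\<mu> + w - 1) = 0" using dvd_small2 d by blast
  then show ?thesis using r by auto
qed


lemma front_ext:
  fixes c :: "int \<Rightarrow> pt"
  assumes adj: "\<And>k. s1 - 1 \<le> k \<Longrightarrow> k < t1 \<Longrightarrow> mv c k \<in> units"
    and inj: "\<And>x y. s1 - 1 \<le> x \<Longrightarrow> x \<le> t1 \<Longrightarrow> s1 - 1 \<le> y \<Longrightarrow> y \<le> t1 \<Longrightarrow> c x = c y \<Longrightarrow> x = y"
    and cop: "coprime a b"
    and S: "\<And>k. s1 \<le> k \<Longrightarrow> k \<le> t1 \<Longrightarrow> c k \<in> std_line a b \<mu>"
    and pq: "s1 \<le> p" "p < q" "q \<le> t1" "Vl a b (c p) = \<mu>" "Vl a b (c q) = \<mu>"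
    and only: "\<And>k. s1 \<le> k \<Longrightarrow> k \<le> t1 \<Longrightarrow> Vl a b (c k) = \<mu> \<Longrightarrow> p \<le> k \<and> k \<le> q"
    and cop': "coprime a' b'"
    and L': "\<And>k. s1 - 1 \<le> k \<Longrightarrow> k \<le> q \<Longrightarrow> c k \<in> std_line a' b' \<mu>'"
  shows "\<exists>a'' b'' \<mu>''. coprime a'' b'' \<and> c ` {s1 - 1..t1} \<subseteq> std_line a'' b'' \<mu>''"
proof -
  define w where "w = \<bar>a\<bar> + \<bar>b\<bar>"
  have win: "\<mu> \<le> Vl a b (c k) \<and> Vl a b (c k) < \<mu> + w" if "s1 \<le> k" "k \<le> t1" for k
    using S[OF that] by (simp add: std_line_iff w_def)
  have w1: "w \<ge> 1" using coprime_w1[OF cop] w_def by simp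
  show ?thesis
  proof (cases "w < 2")
    case True
    then have w11: "w = 1" using w1 by simp
    have allu: "Vl a b (c k) = \<mu>" if "s1 \<le> k" "k \<le> t1" for k using win[OF that] w11 by simp
    have "p \<le> s1" using only[of s1] allu[of s1] pq by simp
    then have "s1 = p" using pq by simp
    have "t1 \<le> q" using only[of t1] allu[of t1] pq by simp
    then have "t1 = q" using pq by simp
    have "c ` {s1 - 1..t1} \<subseteq> std_line a' b' \<mu>'" using L' \<open>t1 = q\<close> by auto
    then show ?thesis using cop' by blast
  next
    case False
    then have w2: "\<bar>a\<bar> + \<bar>b\<bar> \<ge> 2" using w_def by simp
    have adjS: "\<And>k. s1 \<le> k \<Longrightarrow> k < t1 \<Longrightarrow> mv c k \<in> units" using adj by simp
    have injS: "\<And>x y. s1 \<le> x \<Longrightarrow> x \<le> t1 \<Longrightarrow> s1 \<le> y \<Longrightarrow> y \<le> t1 \<Longrightarrow> c x = c y \<Longrightarrow> x = y" using inj by simp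
    have SS: "\<exists>g1 g2 A B. perp g1 g2 \<and> Vl a b g1 = A \<and> Vl a b g2 = - B \<and> A \<ge> 1 \<and> B \<ge> 1 \<and>
     A + B = \<bar>a\<bar> + \<bar>b\<bar> \<and> coprime A (\<bar>a\<bar> + \<bar>b\<bar>) \<and>
     (\<forall>k. s1 \<le> k \<longrightarrow> k < t1 \<longrightarrow> mv c k = g1 \<or> mv c k = g2) \<and>
     (\<exists>k. p \<le> k \<and> k < q \<and> mv c k = g1) \<and> (\<exists>k. p \<le> k \<and> k < q \<and> mv c k = g2)"
      by (rule S_struct[OF adjS injS cop S pq w2])
    then obtain g1 g2 A B where G: "perp g1 g2" "Vl a b g1 = A" "Vl a b g2 = - B" "A \<ge> 1" "B \<ge> 1"
      "A + B = w" "coprime A w"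
      and mvs: "\<forall>k. s1 \<le> k \<longrightarrow> k < t1 \<longrightarrow> mv c k = g1 \<or> mv c k = g2"
      and ex1: "\<exists>k. p \<le> k \<and> k < q \<and> mv c k = g1" and ex2: "\<exists>k. p \<le> k \<and> k < q \<and> mv c k = g2"
      unfolding w_def by blast
    have moves: "mv c k = g1 \<or> mv c k = g2" if "s1 \<le> k" "k < t1" for k using mvs that by blast
    have Gw: "Vl a b g1 - Vl a b g2 = w" using G by simp
    define m0 where "m0 = mv c (s1 - 1)"
    have m0u: "m0 \<in> units" using adj[of "s1 - 1"] pq m0_def by simp
    have winL': "\<mu>' \<le> Vl a' b' (c k) \<and> Vl a' b' (c k) < \<mu>' + \<bar>a'\<bar> + \<bar>b'\<bar>" if "s1 - 1 \<le> k" "k \<le> q" for k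
      using L'[OF that] by (simp add: std_line_iff)
    have NO: "mv c l \<noteq> ng (mv c k)" if "s1 - 1 \<le> k" "k < l" "l < q" for k l
    proof (rule no_opp[where i="s1 - 1" and j=q and c=c and a=a' and b=b' and \<mu>=\<mu>'])
      show "\<And>k. s1 - 1 \<le> k \<Longrightarrow> k < q \<Longrightarrow> mv c k \<in> units" using adj pq by simp
      show "\<And>x y. s1 - 1 \<le> x \<Longrightarrow> x \<le> q \<Longrightarrow> s1 - 1 \<le> y \<Longrightarrow> y \<le> q \<Longrightarrow> c x = c y \<Longrightarrow> x = y" using inj pq by simp
      show "\<And>k. s1 - 1 \<le> k \<Longrightarrow> k \<le> q \<Longrightarrow> \<mu>' \<le> Vl a' b' (c k) \<and> Vl a' b' (c k) < \<mu>' + \<bar>a'\<bar> + \<bar>b'\<bar>" using winL' by simp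
    qed (use that in simp_all)
    obtain k1 where k1: "p \<le> k1" "k1 < q" "mv c k1 = g1" using ex1 by blast
    obtain k2 where k2: "p \<le> k2" "k2 < q" "mv c k2 = g2" using ex2 by blast
    have n1: "m0 \<noteq> ng g1" using NO[of "s1 - 1" k1] k1 pq m0_def by auto
    have n2: "m0 \<noteq> ng g2" using NO[of "s1 - 1" k2] k2 pq m0_def by auto
    have Pu: "g1 \<in> units" "g2 \<in> units" "g1 \<noteq> g2" "g1 \<noteq> ng g2" using G(1) by (simp_all add: perp_def)
    have m0c: "m0 = g1 \<or> m0 = g2" using perp_cover[OF Pu m0u] n1 n2 by blast
    have moves': "mv c k = g1 \<or> mv c k = g2" if "s1 - 1 \<le> k" "k < t1" for k
    proof (cases "k = s1 - 1")
      case True then show ?thesis using m0c m0_def by simp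
    next
      case False then show ?thesis using moves[of k] that by simp
    qed
    define VM where "VM = Vl a b (c (s1 - 1))"
    have Vs1: "Vl a b (c s1) = VM + Vl a b m0" using V_step[of a b c "s1 - 1"] VM_def m0_def by simp
    have ws1: "\<mu> \<le> Vl a b (c s1) \<and> Vl a b (c s1) < \<mu> + w" using win[of s1] pq by simp
    have movesR: "\<And>k. s1 \<le> k \<Longrightarrow> k < t1 \<Longrightarrow> mv c k = g1 \<or> mv c k = g2" using moves by blast
    have winR: "\<And>k. s1 \<le> k \<Longrightarrow> k \<le> t1 \<Longrightarrow> \<mu> \<le> Vl a b (c k) \<and> Vl a b (c k) < \<mu> + w" using win by blast
    have "Vl a b (c q) = \<mu> \<longleftrightarrow> w dvd (q - p)"
      by (rule upper_iff[where ?s1.0=s1 and ?t1.0=t1, OF movesR G(2) Gw G(7) winR]) (use pq in linarith)+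
    then have cgp: "w dvd (q - p)" using pq by simp
    have qpw: "q - p \<ge> w" using cgp pq w1 by (simp add: zdvd_imp_le)
    have "\<exists>r. p \<le> r \<and> r < p + w \<and> Vl a b (c r) = \<mu> + w - 1"
      by (rule lower_exists[where ?s1.0=s1 and ?t1.0=t1, OF movesR G(2) Gw G(7) w1 winR]) (use pq qpw in simp_all)
    then obtain r where r: "p \<le> r" "r < p + w" "Vl a b (c r) = \<mu> + w - 1" by blast
    show ?thesis
    proof (cases "\<mu> \<le> VM \<and> VM < \<mu> + w")
      case True
      have "c ` {s1 - 1..t1} \<subseteq> std_line a b \<mu>"
      proof
        fix z assume "z \<in> c ` {s1 - 1..t1}"
        then obtain k where k: "s1 - 1 \<le> k" "k \<le> t1" "z = c k" by auto
        show "z \<in> std_line a b \<mu>"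
        proof (cases "k = s1 - 1")
          case True then show ?thesis using k \<open>\<mu> \<le> VM \<and> VM < \<mu> + w\<close> VM_def by (simp add: std_line_iff w_def)
        next
          case False then show ?thesis using S[of k] k by simp
        qed
      qed
      then show ?thesis using cop by blast
    next
      case notin: False
      have VMn: "\<not> (\<mu> \<le> VM \<and> VM < \<mu> + w)" using notin .
      have winS: "\<And>k. s1 - 1 < k \<Longrightarrow> k \<le> t1 \<Longrightarrow> \<mu> \<le> Vl a b (c k) \<and> Vl a b (c k) < \<mu> + w" using win by simp
      have movesM: "\<And>k. s1 - 1 \<le> k \<Longrightarrow> k < t1 \<Longrightarrow> mv c k = g1 \<or> mv c k = g2" using moves' by blast
      have movesQ: "\<And>k. s1 - 1 \<le> k \<Longrightarrow> k < q \<Longrightarrow> mv c k = g1 \<or> mv c k = g2" using moves' pq by simp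
      have winQ: "\<And>k. s1 - 1 < k \<Longrightarrow> k \<le> q \<Longrightarrow> \<mu> \<le> Vl a b (c k) \<and> Vl a b (c k) < \<mu> + w" using win pq by simp
      have winL'': "\<And>k. s1 - 1 \<le> k \<Longrightarrow> k \<le> q \<Longrightarrow> \<mu>' \<le> Vl a' b' (c k) \<and> Vl a' b' (c k) < \<mu>' + \<bar>a'\<bar> + \<bar>b'\<bar>" using winL' by blast
      have rq: "r < q" using r qpw by simp
      have rne: "r \<noteq> p" using r pq w2 w_def by auto
      from m0c show ?thesis
      proof
        assume mg1: "m0 = g1"
        have "VM < \<mu>" using Vs1 ws1 mg1 G VMn by auto
        define d where "d = \<mu> - VM"
        have d: "d \<ge> 1" "d \<le> A" using \<open>VM < \<mu>\<close> Vs1 ws1 mg1 G d_def by auto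
        show ?thesis
        proof (cases "d = 1")
          case True
          show ?thesis
          proof (rule pivot[where m="s1 - 1" and e=t1 and ?g1.0=g1 and ?g2.0=g2 and a=a and b=b and A=A and B=B and w=w and \<mu>=\<mu> and \<pi>=q and c=c])
            show "\<And>k. s1 - 1 \<le> k \<Longrightarrow> k < t1 \<Longrightarrow> mv c k = g1 \<or> mv c k = g2" by (rule movesM)
            show "\<And>k. s1 - 1 < k \<Longrightarrow> k \<le> t1 \<Longrightarrow> \<mu> \<le> Vl a b (c k) \<and> Vl a b (c k) < \<mu> + w" by (rule winS)
            show "\<And>k. q < k \<Longrightarrow> k \<le> t1 \<Longrightarrow> Vl a b (c k) \<noteq> \<mu>"
            proof -
              fix k assume k: "q < k" "k \<le> t1"
              then have "s1 \<le> k" using pq by simp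
              then show "Vl a b (c k) \<noteq> \<mu>" using only[of k] k by auto
            qed
            show "Vl a b (c (s1 - 1)) = \<mu> - 1" using True d_def VM_def by simp
          qed (use G pq in simp_all)
        next
          case False
          have "False"
          proof (rule balance[where m="s1 - 1" and e=q and ?g1.0=g1 and ?g2.0=g2 and a=a and b=b and A=A and B=B and w=w and \<mu>=\<mu> and d=d and ?r1.0=r and ?P2.0=q and a'=a' and b'=b' and \<mu>'=\<mu>' and c=c])
            show "\<And>k. s1 - 1 \<le> k \<Longrightarrow> k < q \<Longrightarrow> mv c k = g1 \<or> mv c k = g2" by (rule movesQ)
            show "\<And>k. s1 - 1 < k \<Longrightarrow> k \<le> q \<Longrightarrow> \<mu> \<le> Vl a b (c k) \<and> Vl a b (c k) < \<mu> + w" by (rule winQ)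
            show "\<And>k. s1 - 1 \<le> k \<Longrightarrow> k \<le> q \<Longrightarrow> \<mu>' \<le> Vl a' b' (c k) \<and> Vl a' b' (c k) < \<mu>' + \<bar>a'\<bar> + \<bar>b'\<bar>" by (rule winL'')
            show "Vl a b (c (s1 - 1)) = \<mu> - d" using d_def VM_def by simp
            show "mv c (s1 - 1) = g1" using mg1 m0_def by simp
            show "2 \<le> d" using False d by simp
          qed (use G pq d r rq in simp_all)
          then show ?thesis by simp
        qed
      next
        assume mg2: "m0 = g2"
        have "VM \<ge> \<mu> + w" using Vs1 ws1 mg2 G VMn by auto
        define d where "d = VM - (\<mu> + w - 1)"
        have d: "d \<ge> 1" "d \<le> B" using \<open>VM \<ge> \<mu> + w\<close> Vs1 ws1 mg2 G d_def by auto
        define muN where "muN = - (\<mu> + w - 1)"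
        have Gn: "Vl (-a) (-b) g2 = B" "Vl (-a) (-b) g1 = - A" using G by (simp_all add: V_neg)
        have Pn: "perp g2 g1" using perp_sym G(1) by blast
        have wn: "B + A = w" using G by simp
        have winN: "muN \<le> Vl (-a) (-b) (c k) \<and> Vl (-a) (-b) (c k) < muN + w" if "s1 \<le> k" "k \<le> t1" for k
          using win[OF that] muN_def by (simp add: V_neg)
        have movesM': "\<And>k. s1 - 1 \<le> k \<Longrightarrow> k < t1 \<Longrightarrow> mv c k = g2 \<or> mv c k = g1" using moves' by blast
        have movesQ': "\<And>k. s1 - 1 \<le> k \<Longrightarrow> k < q \<Longrightarrow> mv c k = g2 \<or> mv c k = g1" using moves' pq by fastforce
        show ?thesis
        proof (cases "d = 1")
          case True
          define LL where "LL = {k \<in> {s1..t1}. Vl a b (c k) = \<mu> + w - 1}"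
          have finLL: "finite LL" unfolding LL_def by (rule finite_subset[of _ "{s1..t1}"]) auto
          have rLL: "r \<in> LL" using r pq qpw LL_def by auto
          define pi where "pi = Max LL"
          have piLL: "pi \<in> LL" using finLL rLL pi_def by (metis Max_in empty_iff)
          have pimax: "k \<le> pi" if "k \<in> LL" for k using finLL that pi_def by simp
          show ?thesis
          proof (rule pivot[where m="s1 - 1" and e=t1 and ?g1.0=g2 and ?g2.0=g1 and a="-a" and b="-b" and A=B and B=A and w=w and \<mu>=muN and \<pi>=pi and c=c])
            show "\<And>k. s1 - 1 \<le> k \<Longrightarrow> k < t1 \<Longrightarrow> mv c k = g2 \<or> mv c k = g1" by (rule movesM')
            show "\<And>k. s1 - 1 < k \<Longrightarrow> k \<le> t1 \<Longrightarrow> muN \<le> Vl (-a) (-b) (c k) \<and> Vl (-a) (-b) (c k) < muN + w" using winN by simp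
            show "\<And>k. pi < k \<Longrightarrow> k \<le> t1 \<Longrightarrow> Vl (-a) (-b) (c k) \<noteq> muN"
            proof -
              fix k assume k: "pi < k" "k \<le> t1"
              show "Vl (-a) (-b) (c k) \<noteq> muN"
              proof
                assume "Vl (-a) (-b) (c k) = muN"
                then have "k \<in> LL" using k piLL LL_def muN_def by (auto simp: V_neg)
                then show False using pimax k by fastforce
              qed
            qed
            show "Vl (-a) (-b) (c (s1 - 1)) = muN - 1" using True d_def VM_def muN_def by (simp add: V_neg)
            show "Vl (-a) (-b) (c pi) = muN" using piLL LL_def muN_def by (simp add: V_neg)
            show "s1 - 1 < pi" "pi \<le> t1" using piLL LL_def by auto
          qed (use Gn Pn wn G in simp_all)
        next
          case False
          have "False"
          proof (rule balance[where m="s1 - 1" and e=q and ?g1.0=g2 and ?g2.0=g1 and a="-a" and b="-b" and A=B and B=A and w=w and \<mu>=muN and d=d and ?r1.0=p and ?P2.0=r and a'=a' and b'=b' and \<mu>'=\<mu>' and c=c])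
            show "\<And>k. s1 - 1 \<le> k \<Longrightarrow> k < q \<Longrightarrow> mv c k = g2 \<or> mv c k = g1" by (rule movesQ')
            show "\<And>k. s1 - 1 < k \<Longrightarrow> k \<le> q \<Longrightarrow> muN \<le> Vl (-a) (-b) (c k) \<and> Vl (-a) (-b) (c k) < muN + w" using winN pq by simp
            show "\<And>k. s1 - 1 \<le> k \<Longrightarrow> k \<le> q \<Longrightarrow> \<mu>' \<le> Vl a' b' (c k) \<and> Vl a' b' (c k) < \<mu>' + \<bar>a'\<bar> + \<bar>b'\<bar>" by (rule winL'')
            show "Vl (-a) (-b) (c (s1 - 1)) = muN - d" using d_def VM_def muN_def by (simp add: V_neg)
            show "mv c (s1 - 1) = g2" using mg2 m0_def by simp
            show "2 \<le> d" using False d by simp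
            show "Vl (-a) (-b) (c p) = muN + w - 1" using pq muN_def by (simp add: V_neg)
            show "Vl (-a) (-b) (c r) = muN" using r muN_def by (simp add: V_neg)
            show "p < r" using r rne by simp
          qed (use Gn Pn wn G pq d r rq in simp_all)
          then show ?thesis by simp
        qed
      qed
    qed
  qed
qed


lemma per_nat: fixes c :: "int \<Rightarrow> 'a" and n x :: int assumes "\<forall>i. c (i + n) = c i" shows "c (x + int m * n) = c x"
proof (induction m arbitrary: x)
  case 0 then show ?case by simp
next
  case (Suc m)
  have "c (x + int (Suc m) * n) = c ((x + int m * n) + n)" by (simp add: algebra_simps)
  also have "\<dots> = c (x + int m * n)" using assms by simp
  finally show ?case using Suc by simp
qed

lemma per_int: fixes c :: "int \<Rightarrow> 'a" and n x k :: int assumes "\<forall>i. c (i + n) = c i" shows "c (x + k * n) = c x"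
proof (cases "k \<ge> 0")
  case True
  then obtain m where "k = int m" by (metis nonneg_int_cases)
  then show ?thesis using per_nat[OF assms] by simp
next
  case False
  then obtain m where m: "- k = int m" by (metis neg_0_less_iff_less nonneg_int_cases not_le less_imp_le)
  have km: "k = - int m" using m by simp
  have eq: "(x + k * n) + int m * n = x" unfolding km by (simp add: algebra_simps)
  have "c x = c ((x + k * n) + int m * n)" by (simp only: eq)
  also have "\<dots> = c (x + k * n)" using per_nat[OF assms] by simp
  finally show ?thesis by simp
qed

lemma contour_inj:
  assumes "contour \<Gamma> c n" "\<bar>x - y\<bar> < n" "c x = c y"
  shows "x = y"
proof -
  have n: "0 < n" "\<forall>i. c (i + n) = c i" "inj_on c {0..<n}" using assms(1) by (simp_all add: contour_def)
  have ex: "x mod n + (x div n) * n = x" by (rule mod_div_mult_eq)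
  have ey: "y mod n + (y div n) * n = y" by (rule mod_div_mult_eq)
  have "c (x mod n + (x div n) * n) = c (x mod n)" by (rule per_int[OF n(2)])
  then have cx: "c (x mod n) = c x" by (simp only: ex)
  have "c (y mod n + (y div n) * n) = c (y mod n)" by (rule per_int[OF n(2)])
  then have cy: "c (y mod n) = c y" by (simp only: ey)
  have "x mod n \<in> {0..<n}" "y mod n \<in> {0..<n}" using n(1) by simp_all
  then have "x mod n = y mod n" using n(3) cx cy assms(3) by (metis inj_on_eq_iff)
  then have "n dvd (x - y)" by (simp add: mod_eq_dvd_iff)
  moreover have "- n < x - y" "x - y < n" using assms(2) by auto
  ultimately have "x - y = 0" using dvd_small2 by blast
  then show ?thesis by simp
qed

lemma contour_units: assumes "contour \<Gamma> c n" shows "mv c k \<in> units"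
proof -
  have "adj4 (c k) (c (k + 1))" using assms by (simp add: contour_def)
  then show ?thesis by (simp add: adj4_units mv_def)
qed

lemma dss_sub:
  assumes "is_dss c n i j" "i \<le> i'" "i' \<le> j'" "j' \<le> j"
  shows "is_dss c n i' j'"
proof -
  obtain a b \<mu> where "in_std_line (c ` {i..j}) a b \<mu>" using assms(1) by (auto simp: is_dss_def)
  then have "in_std_line (c ` {i'..j'}) a b \<mu>" using assms by (auto simp: in_std_line_def)
  then show ?thesis using assms by (auto simp: is_dss_def)
qed

lemma card_mult:
  fixes w p q :: int
  assumes w: "w \<ge> 1" and d: "w dvd (q - p)" and pq: "p \<le> q"
  shows "card {k \<in> {p..q}. w dvd (k - p)} = nat ((q - p) div w + 1)"
proof -
  define N where "N = (q - p) div w"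
  have qN: "q - p = w * N" using d N_def by simp
  have "{k \<in> {p..q}. w dvd (k - p)} = (\<lambda>j. p + j * w) ` {0..N}"
  proof
    show "{k \<in> {p..q}. w dvd (k - p)} \<subseteq> (\<lambda>j. p + j * w) ` {0..N}"
    proof
      fix k assume k: "k \<in> {k \<in> {p..q}. w dvd (k - p)}"
      then obtain j where j: "k - p = w * j" by (auto elim: dvdE)
      have "0 \<le> w * j" using j k by simp
      then have j0: "0 \<le> j" using w by (simp add: zero_le_mult_iff)
      have "w * j \<le> w * N" using j k qN by simp
      then have "j \<le> N" using w by simp
      then show "k \<in> (\<lambda>j. p + j * w) ` {0..N}" using j j0 by (intro image_eqI[of _ _ j]) (auto simp: algebra_simps)
    qed
  next
    show "(\<lambda>j. p + j * w) ` {0..N} \<subseteq> {k \<in> {p..q}. w dvd (k - p)}"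
    proof
      fix k assume "k \<in> (\<lambda>j. p + j * w) ` {0..N}"
      then obtain j where j: "0 \<le> j" "j \<le> N" "k = p + j * w" by auto
      have "j * w \<le> N * w" using j w by (simp add: mult_right_mono)
      moreover have "0 \<le> j * w" using j w by simp
      ultimately show "k \<in> {k \<in> {p..q}. w dvd (k - p)}" using j qN by (auto simp: algebra_simps)
    qed
  qed
  moreover have "inj_on (\<lambda>j. p + j * w) {0..N}" using w by (auto simp: inj_on_def)
  ultimately have "card {k \<in> {p..q}. w dvd (k - p)} = card {0..N}" by (simp add: card_image)
  then show ?thesis using N_def by simp
qed

lemma mv_rev: fixes c :: "int \<Rightarrow> pt" shows "mv (\<lambda>k. c (- k)) k = ng (mv c (- k - 1))"
  by (simp add: mv_def ng_def)

lemma units_ng: "m \<in> units \<Longrightarrow> ng m \<in> units" by (auto simp: units_def ng_def)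

lemma img_rev: fixes c :: "int \<Rightarrow> 'a" and x y :: int shows "(\<lambda>k. c (- k)) ` {x..y} = c ` {- y..- x}"
proof
  show "(\<lambda>k. c (- k)) ` {x..y} \<subseteq> c ` {- y..- x}"
  proof
    fix z assume "z \<in> (\<lambda>k. c (- k)) ` {x..y}"
    then obtain k where "k \<in> {x..y}" "z = c (- k)" by auto
    then show "z \<in> c ` {- y..- x}" by (intro image_eqI[of _ _ "- k"]) auto
  qed
  show "c ` {- y..- x} \<subseteq> (\<lambda>k. c (- k)) ` {x..y}"
  proof
    fix z assume "z \<in> c ` {- y..- x}"
    then obtain j where "j \<in> {- y..- x}" "z = c j" by auto
    then show "z \<in> (\<lambda>k. c (- k)) ` {x..y}" by (intro image_eqI[of _ _ "- j"]) auto
  qed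
qed

theorem proposition4:
  fixes \<Gamma> V :: "pt set" and c :: "int \<Rightarrow> pt" and n p q a b \<mu> s t :: int and f :: nat
  assumes "cdp \<Gamma>"
    and "vertex_set \<Gamma> V"
    and "contour \<Gamma> c n"
    and "supporting_edge V c n p q a b \<mu>"
    and "made_of_patterns c p q a b \<mu> f"
    and "maximal_segment c n s t" and "s \<le> p" and "q \<le> t"
  shows "L1 p q \<le> L1 s t \<and> L1 s t \<le> (real f + 2) / real f * L1 p q - 2 \<and>
         L1 s t / 3 \<le> L1 p q \<and> L1 p q \<le> L1 s t \<and> L1 s t \<le> 3 * L1 p q"
proof -
  note con = assms(3)
  have U: "\<And>k. mv c k \<in> units" using contour_units[OF con] .
  obtain s1 t1 where DE: "digital_edge V c n p q" and MS1: "maximal_segment c n s1 t1"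
    and OC: "oriented_char_line c s1 t1 a b \<mu>" and s1p: "s1 \<le> p" and qt1: "q \<le> t1"
    and ulp: "upper_leaning a b \<mu> (c p)" and ulq: "upper_leaning a b \<mu> (c q)"
    and onlyU: "\<forall>k\<in>{s1..t1}. upper_leaning a b \<mu> (c k) \<longrightarrow> p \<le> k \<and> k \<le> q"
    using assms(4) unfolding supporting_edge_def by blast
  have pq: "p < q" using DE by (simp add: digital_edge_def)
  have ISL: "in_std_line (c ` {s1..t1}) a b \<mu>" using OC by (simp add: oriented_char_line_def char_line_def)
  have cop: "coprime a b" using ISL by (simp add: in_std_line_def)
  have S: "c k \<in> std_line a b \<mu>" if "s1 \<le> k" "k \<le> t1" for k using ISL that by (auto simp: in_std_line_def)
  have ulV: "upper_leaning a b \<mu> z \<longleftrightarrow> Vl a b z = \<mu>" for z by (simp add: upper_leaning_def Vl_def)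
  have Vp: "Vl a b (c p) = \<mu>" and Vq: "Vl a b (c q) = \<mu>" using ulp ulq ulV by auto
  have only: "p \<le> k \<and> k \<le> q" if "s1 \<le> k" "k \<le> t1" "Vl a b (c k) = \<mu>" for k
    using onlyU that ulV by auto
  define w where "w = \<bar>a\<bar> + \<bar>b\<bar>"
  have w1: "w \<ge> 1" using coprime_w1[OF cop] w_def by simp
  have win: "\<mu> \<le> Vl a b (c k) \<and> Vl a b (c k) < \<mu> + w" if "s1 \<le> k" "k \<le> t1" for k
    using S[OF that] by (simp add: std_line_iff w_def)
  have MS1d: "is_dss c n s1 t1" "\<not> is_dss c n (s1 - 1) t1" "\<not> is_dss c n s1 (t1 + 1)"
    using MS1 by (simp_all add: maximal_segment_def)
  have t1s1: "t1 - s1 < n" using MS1d(1) by (simp add: is_dss_def)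
  have injS: "x = y" if "s1 \<le> x" "x \<le> t1" "s1 \<le> y" "y \<le> t1" "c x = c y" for x y
    using contour_inj[OF con, of x y] that t1s1 by simp
  have UI: "Vl a b (c k) = \<mu> \<longleftrightarrow> w dvd (k - p)" if k: "s1 \<le> k" "k \<le> t1" for k
  proof (cases "w < 2")
    case True
    then have "w = 1" using w1 by simp
    then show ?thesis using win[OF k] by simp
  next
    case False
    then have w2: "\<bar>a\<bar> + \<bar>b\<bar> \<ge> 2" using w_def by simp
    have adjS: "\<And>k. s1 \<le> k \<Longrightarrow> k < t1 \<Longrightarrow> mv c k \<in> units" using U by simp
    have injS': "\<And>x y. s1 \<le> x \<Longrightarrow> x \<le> t1 \<Longrightarrow> s1 \<le> y \<Longrightarrow> y \<le> t1 \<Longrightarrow> c x = c y \<Longrightarrow> x = y" using injS by blast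
    have SS': "\<And>k. s1 \<le> k \<Longrightarrow> k \<le> t1 \<Longrightarrow> c k \<in> std_line a b \<mu>" using S by blast
    have pqS: "s1 \<le> p" "p < q" "q \<le> t1" "Vl a b (c p) = \<mu>" "Vl a b (c q) = \<mu>" using s1p pq qt1 Vp Vq by auto
    have "\<exists>g1 g2 A B. perp g1 g2 \<and> Vl a b g1 = A \<and> Vl a b g2 = - B \<and> A \<ge> 1 \<and> B \<ge> 1 \<and>
     A + B = \<bar>a\<bar> + \<bar>b\<bar> \<and> coprime A (\<bar>a\<bar> + \<bar>b\<bar>) \<and>
     (\<forall>k. s1 \<le> k \<longrightarrow> k < t1 \<longrightarrow> mv c k = g1 \<or> mv c k = g2) \<and>
     (\<exists>k. p \<le> k \<and> k < q \<and> mv c k = g1) \<and> (\<exists>k. p \<le> k \<and> k < q \<and> mv c k = g2)"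
      by (rule S_struct[OF adjS injS' cop SS' pqS w2])
    then obtain g1 g2 A B where G: "Vl a b g1 = A" "Vl a b g2 = - B" "A + B = w" "coprime A w"
      and mvs: "\<forall>k. s1 \<le> k \<longrightarrow> k < t1 \<longrightarrow> mv c k = g1 \<or> mv c k = g2"
      unfolding w_def by blast
    have movesR: "\<And>k. s1 \<le> k \<Longrightarrow> k < t1 \<Longrightarrow> mv c k = g1 \<or> mv c k = g2" using mvs by blast
    have Gw: "Vl a b g1 - Vl a b g2 = w" using G by simp
    have winR: "\<And>k. s1 \<le> k \<Longrightarrow> k \<le> t1 \<Longrightarrow> \<mu> \<le> Vl a b (c k) \<and> Vl a b (c k) < \<mu> + w" using win by blast
    show ?thesis
      by (rule upper_iff[where ?s1.0=s1 and ?t1.0=t1, OF movesR G(1) Gw G(4) winR]) (use s1p pq qt1 Vp k in linarith)+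
  qed
  have qp: "w dvd (q - p)" using UI[of q] s1p pq qt1 Vq by simp
  have ps: "p - s1 < w"
  proof (rule ccontr)
    assume "\<not> ?thesis"
    then have "s1 \<le> p - w" "p - w \<le> t1" using w1 pq qt1 by auto
    then have "Vl a b (c (p - w)) = \<mu>" using UI[of "p - w"] by simp
    then have "p \<le> p - w" using only[of "p - w"] \<open>s1 \<le> p - w\<close> \<open>p - w \<le> t1\<close> by simp
    then show False using w1 by simp
  qed
  have tq: "t1 - q < w"
  proof (rule ccontr)
    assume "\<not> ?thesis"
    then have "s1 \<le> q + w" "q + w \<le> t1" using w1 pq s1p by auto
    have "q + w - p = (q - p) + w" by simp
    then have "w dvd (q + w - p)" using qp by (metis dvd_add dvd_refl)
    then have "Vl a b (c (q + w)) = \<mu>" using UI[of "q + w"] \<open>s1 \<le> q + w\<close> \<open>q + w \<le> t1\<close> by simp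
    then have "q + w \<le> q" using only[of "q + w"] \<open>s1 \<le> q + w\<close> \<open>q + w \<le> t1\<close> by simp
    then show False using w1 by simp
  qed
  have eqk: "(k \<in> {p..q} \<and> upper_leaning a b \<mu> (c k)) = (k \<in> {p..q} \<and> w dvd (k - p))" for k
  proof (cases "k \<in> {p..q}")
    case True
    have "upper_leaning a b \<mu> (c k) \<longleftrightarrow> Vl a b (c k) = \<mu>" by (rule ulV)
    also have "\<dots> \<longleftrightarrow> w dvd (k - p)" using UI[of k] True s1p qt1 by simp
    finally show ?thesis using True by simp
  next
    case False then show ?thesis by blast
  qed
  have "{k \<in> {p..q}. upper_leaning a b \<mu> (c k)} = {k \<in> {p..q}. w dvd (k - p)}"
    by (rule Collect_cong) (rule eqk)
  then have "card {k \<in> {p..q}. w dvd (k - p)} = f + 1" using assms(5) by (simp add: made_of_patterns_def)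
  moreover have "card {k \<in> {p..q}. w dvd (k - p)} = nat ((q - p) div w + 1)" using card_mult[OF w1 qp] pq by simp
  ultimately have "nat ((q - p) div w + 1) = f + 1" by simp
  moreover have "(q - p) div w \<ge> 0" using pq w1 by (simp add: pos_imp_zdiv_nonneg_iff)
  ultimately have fdiv: "(q - p) div w = int f" by linarith
  have qpf: "q - p = w * int f" using fdiv qp by (metis dvd_mult_div_cancel)
  have f1: "f \<ge> 1"
  proof (rule ccontr)
    assume "\<not> ?thesis" then have "f = 0" by simp
    then show False using qpf pq by simp
  qed
  have bound1: "t1 - s1 \<le> (int f + 2) * w - 2" using ps tq qpf by (simp add: algebra_simps)
  obtain a' b' \<mu>' where ST: "in_std_line (c ` {s..t}) a' b' \<mu>'" and stn: "t - s < n" and st: "s \<le> t"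
    using assms(6) by (auto simp: maximal_segment_def is_dss_def)
  have cop': "coprime a' b'" using ST by (simp add: in_std_line_def)
  have Lst: "c k \<in> std_line a' b' \<mu>'" if "s \<le> k" "k \<le> t" for k using ST that by (auto simp: in_std_line_def)
  have mkdss: "is_dss c n i j" if "i \<le> j" "j - i < n" "\<exists>a b \<mu>. coprime a b \<and> c ` {i..j} \<subseteq> std_line a b \<mu>" for i j
    using that by (auto simp: is_dss_def in_std_line_def)
  have B: "t - s \<le> t1 - s1"
  proof (cases "s < s1")
    case ss1: True
    have tt1: "t < t1"
    proof (rule ccontr)
      assume "\<not> t < t1"
      then have "is_dss c n (s1 - 1) t1" using dss_sub[OF MS1d(1)] assms(6) s1p pq qt1
        dss_sub[of c n s t "s1 - 1" t1] ss1 by (simp add: maximal_segment_def)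
      then show False using MS1d(2) by simp
    qed
    show ?thesis
    proof (cases "t1 - (s1 - 1) < n")
      case False then show ?thesis using stn by simp
    next
      case True
      have "\<exists>a'' b'' \<mu>''. coprime a'' b'' \<and> c ` {s1 - 1..t1} \<subseteq> std_line a'' b'' \<mu>''"
      proof (rule front_ext[where ?s1.0=s1 and ?t1.0=t1 and p=p and q=q and c=c and a=a and b=b and \<mu>=\<mu> and a'=a' and b'=b' and \<mu>'=\<mu>'])
        show "\<And>k. s1 - 1 \<le> k \<Longrightarrow> k < t1 \<Longrightarrow> mv c k \<in> units" using U by simp
        show "\<And>x y. s1 - 1 \<le> x \<Longrightarrow> x \<le> t1 \<Longrightarrow> s1 - 1 \<le> y \<Longrightarrow> y \<le> t1 \<Longrightarrow> c x = c y \<Longrightarrow> x = y"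
        proof -
          fix x y assume xy: "s1 - 1 \<le> x" "x \<le> t1" "s1 - 1 \<le> y" "y \<le> t1" "c x = c y"
          show "x = y" using contour_inj[OF con, of x y] xy True by simp
        qed
        show "\<And>k. s1 \<le> k \<Longrightarrow> k \<le> t1 \<Longrightarrow> c k \<in> std_line a b \<mu>" using S by blast
        show "\<And>k. s1 \<le> k \<Longrightarrow> k \<le> t1 \<Longrightarrow> Vl a b (c k) = \<mu> \<Longrightarrow> p \<le> k \<and> k \<le> q" using only by blast
        show "\<And>k. s1 - 1 \<le> k \<Longrightarrow> k \<le> q \<Longrightarrow> c k \<in> std_line a' b' \<mu>'"
          using Lst ss1 assms(8) by simp
      qed (use cop cop' s1p pq qt1 Vp Vq in simp_all)
      then have "is_dss c n (s1 - 1) t1" using mkdss[of "s1 - 1" t1] True s1p pq qt1 by simp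
      then show ?thesis using MS1d(2) by simp
    qed
  next
    case False
    show ?thesis
    proof (cases "t \<le> t1")
      case True then show ?thesis using False by simp
    next
      case tt1: False
      show ?thesis
      proof (cases "(t1 + 1) - s1 < n")
        case False then show ?thesis using stn by simp
      next
        case True
        define c' where "c' = (\<lambda>k. c (- k))"
        have "\<exists>a'' b'' \<mu>''. coprime a'' b'' \<and> c' ` {(- t1) - 1..(- s1)} \<subseteq> std_line a'' b'' \<mu>''"
        proof (rule front_ext[where ?s1.0="- t1" and ?t1.0="- s1" and p="- q" and q="- p" and c=c' and a=a and b=b and \<mu>=\<mu> and a'=a' and b'=b' and \<mu>'=\<mu>'])
          show "\<And>k. - t1 - 1 \<le> k \<Longrightarrow> k < - s1 \<Longrightarrow> mv c' k \<in> units"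
            using U units_ng mv_rev unfolding c'_def by metis
          show "\<And>x y. - t1 - 1 \<le> x \<Longrightarrow> x \<le> - s1 \<Longrightarrow> - t1 - 1 \<le> y \<Longrightarrow> y \<le> - s1 \<Longrightarrow> c' x = c' y \<Longrightarrow> x = y"
          proof -
            fix x y assume xy: "- t1 - 1 \<le> x" "x \<le> - s1" "- t1 - 1 \<le> y" "y \<le> - s1" "c' x = c' y"
            have "- x = - y" using contour_inj[OF con, of "- x" "- y"] xy True unfolding c'_def by simp
            then show "x = y" by simp
          qed
          show "\<And>k. - t1 \<le> k \<Longrightarrow> k \<le> - s1 \<Longrightarrow> c' k \<in> std_line a b \<mu>" using S unfolding c'_def by simp
          show "\<And>k. - t1 \<le> k \<Longrightarrow> k \<le> - s1 \<Longrightarrow> Vl a b (c' k) = \<mu> \<Longrightarrow> - q \<le> k \<and> k \<le> - p"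
          proof -
            fix k assume k: "- t1 \<le> k" "k \<le> - s1" "Vl a b (c' k) = \<mu>"
            then have "p \<le> - k \<and> - k \<le> q" using only[of "- k"] unfolding c'_def by simp
            then show "- q \<le> k \<and> k \<le> - p" by simp
          qed
          show "\<And>k. - t1 - 1 \<le> k \<Longrightarrow> k \<le> - p \<Longrightarrow> c' k \<in> std_line a' b' \<mu>'"
            using Lst tt1 assms(7) unfolding c'_def by simp
        qed (use cop cop' s1p pq qt1 Vp Vq in \<open>simp_all add: c'_def\<close>)
        moreover have "c' ` {(- t1) - 1..(- s1)} = c ` {s1..t1 + 1}"
          using img_rev[of c "(- t1) - 1" "- s1"] unfolding c'_def by (simp add: add.commute)
        ultimately have "is_dss c n s1 (t1 + 1)" using mkdss[of s1 "t1 + 1"] True s1p pq qt1 by simp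
        then show ?thesis using MS1d(3) by simp
      qed
    qed
  qed
  have tsb: "t - s \<le> (int f + 2) * w - 2" using B bound1 by simp
  have lo: "q - p \<le> t - s" using assms(7,8) by simp
  have fw: "(int f + 2) * w \<le> 3 * (int f * w)"
  proof -
    have "(2 * int f - 2) * w \<ge> 0" using f1 w1 by simp
    then show ?thesis by (simp add: algebra_simps)
  qed
  have fpos: "real f > 0" using f1 by simp
  have eqr: "(real f + 2) / real f * real_of_int (q - p) = (real f + 2) * real_of_int w"
    using qpf fpos by (simp add: field_simps)
  have r1: "real_of_int (t - s) \<le> (real f + 2) * real_of_int w - 2"
  proof -
    have "real_of_int (t - s) \<le> real_of_int ((int f + 2) * w - 2)" using tsb by linarith
    then show ?thesis by simp
  qed
  have r2: "real_of_int (t - s) \<le> 3 * real_of_int (q - p)"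
  proof -
    have e: "3 * (q - p) = 3 * (int f * w)" using qpf by (simp add: mult.commute)
    have "t - s \<le> 3 * (int f * w)" using tsb fw by linarith
    then have "t - s \<le> 3 * (q - p)" using e by simp
    then show ?thesis by linarith
  qed
  have r3: "real_of_int (q - p) \<le> real_of_int (t - s)" using lo by linarith
  show ?thesis unfolding L1_def using eqr r1 r2 r3 by simp
qed

end
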